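(* Let $f$ be a probability density on $\mathbb{R}$ and let ${\bf X}_{\text{PROS}}=\{X_{[d_j]i}: j=1,\dots,n;\ i=1,\dots,L\}$ be a $\text{PROS}_{\boldsymbol{\alpha}}(n,L,s,D)$ sample of size $N=nL$ from $f$ (as defined in the context). Let $h$ be a real function with $\mu_h=\mathbb{E}[h(X)]$, $X\sim f$, and assume the required moments of $h(X)$ exist. Define $$\hat{\mu}_{h.\text{PROS}}=\frac{1}{N}\sum_{i=1}^L\sum_{j=1}^n h(X_{[d_j]i}).$$ Then: (i) $\mathbb{E}(\hat{\mu}_{h.\text{PROS}})=\mu_h$; (ii) $\mathrm{var}(\hat{\mu}_{h.\text{PROS}})\le \mathrm{var}(\hat{\mu}_{h.\text{SRS}})$, where $\hat{\mu}_{h.\text{SRS}}=\frac1N\sum_{k=1}^N h(X_k)$ with $X_1,\dots,X_N$ i.i.d. with density $f$; (iii) $\hat{\mu}_{h.\text{PROS}}$ is asymptotically normally distributed with mean $\mu_h$ and variance $\mathrm{var}(\hat{\mu}_{h.\text{PROS}})$ as $L\to\infty$; (iv) $\hat{\mu}_{h.\text{PROS}}$ is a strongly consistent estimator of $\mu_h$ as $L\to\infty$.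
   Context: Let $f$ be a density with cdf $F$. Fix positive integers $s,n,L$ with $m=s/n$ an integer, and the design parameter $D=\{d_1,\dots,d_n\}$ with $d_j=\{(j-1)m+1,\dots,jm\}$. Let $\boldsymbol{\alpha}=(\alpha_{d_j,d_h})_{j,h=1}^n$ be a doubly stochastic matrix of misplacement probabilities ($\alpha_{d_j,d_h}$ is the probability that a unit from subset $d_h$ is placed in subset $d_j$; rows and columns sum to 1). For $u=1,\dots,s$, $f_{(u:s)}(x)=\frac{s!}{(u-1)!(s-u)!}F(x)^{u-1}(1-F(x))^{s-u}f(x)$ is the density of the $u$-th order statistic of $s$ i.i.d. draws from $f$. A $\text{PROS}_{\boldsymbol{\alpha}}(n,L,s,D)$ sample (partially rank-ordered set sample: in each of $L$ cycles and for each $j$, $s$ units are drawn, judgment-partitioned into ordered subsets $d_1,\dots,d_n$ with subsetting errors governed by $\boldsymbol\alpha$, and one unit drawn at random from subset $d_j$ is measured) is a family of independent random variables $X_{[d_j]i}$, $j=1,\dots,n$, $i=1,\dots,L$, where $X_{[d_j]i}$ has density $f_{[d_j]}(x)=\frac1m\sum_{h=1}^n\sum_{u\in d_h}\alpha_{d_j,d_h}f_{(u:s)}(x)$. *)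

theory Defs
  imports "HOL-Probability.Probability"
begin

definition cdf_of :: "(real \<Rightarrow> real) \<Rightarrow> real \<Rightarrow> real" where
  "cdf_of f x = measure (density lborel (\<lambda>t. ennreal (f t))) {..x}"

text \<open>density of the u-th order statistic of s i.i.d. draws from f\<close>
definition os_density :: "(real \<Rightarrow> real) \<Rightarrow> nat \<Rightarrow> nat \<Rightarrow> real \<Rightarrow> real" where
  "os_density f s u x =
     fact s / (fact (u - 1) * fact (s - u)) * cdf_of f x ^ (u - 1) * (1 - cdf_of f x) ^ (s - u) * f x"

definition pros_subset :: "nat \<Rightarrow> nat \<Rightarrow> nat \<Rightarrow> nat set" where
  "pros_subset s n j = {(j - 1) * (s div n) + 1 .. j * (s div n)}"

definition doubly_stochastic :: "nat \<Rightarrow> (nat \<Rightarrow> nat \<Rightarrow> real) \<Rightarrow> bool" where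
  "doubly_stochastic n \<alpha> \<longleftrightarrow>
     (\<forall>j\<in>{1..n}. \<forall>h\<in>{1..n}. 0 \<le> \<alpha> j h) \<and>
     (\<forall>j\<in>{1..n}. (\<Sum>h=1..n. \<alpha> j h) = 1) \<and>
     (\<forall>h\<in>{1..n}. (\<Sum>j=1..n. \<alpha> j h) = 1)"

text \<open>density f_[d_j] of a PROS observation from judgment subset d_j
  (alpha j h = probability that a unit from d_h is placed in d_j)\<close>
definition pros_density ::
  "(real \<Rightarrow> real) \<Rightarrow> nat \<Rightarrow> nat \<Rightarrow> (nat \<Rightarrow> nat \<Rightarrow> real) \<Rightarrow> nat \<Rightarrow> real \<Rightarrow> real" where
  "pros_density f s n \<alpha> j x =
     (1 / real (s div n)) * (\<Sum>h=1..n. \<Sum>u\<in>pros_subset s n h. \<alpha> j h * os_density f s u x)"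

definition pros_est ::
  "nat \<Rightarrow> (real \<Rightarrow> real) \<Rightarrow> (nat \<Rightarrow> nat \<Rightarrow> 'a \<Rightarrow> real) \<Rightarrow> nat \<Rightarrow> 'a \<Rightarrow> real" where
  "pros_est n h X L \<omega> = (\<Sum>i=1..L. \<Sum>j=1..n. h (X j i \<omega>)) / real (n * L)"

definition rv_mean :: "'a measure \<Rightarrow> ('a \<Rightarrow> real) \<Rightarrow> real" where
  "rv_mean M Y = (\<integral>\<omega>. Y \<omega> \<partial>M)"

definition rv_var :: "'a measure \<Rightarrow> ('a \<Rightarrow> real) \<Rightarrow> real" where
  "rv_var M Y = (\<integral>\<omega>. (Y \<omega> - rv_mean M Y)\<^sup>2 \<partial>M)"

end

theory Submission
  imports Defs "HOL-Probability.Probability" "HOL-Library.Discrete_Functions"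
begin


lemma (in prob_space) sq_int_mult:
  fixes U V :: "'a \<Rightarrow> real"
  assumes [measurable]: "U \<in> borel_measurable M" "V \<in> borel_measurable M"
    and "integrable M (\<lambda>x. (U x)\<^sup>2)" "integrable M (\<lambda>x. (V x)\<^sup>2)"
  shows "integrable M (\<lambda>x. U x * V x)"
proof (rule Bochner_Integration.integrable_bound[where f="\<lambda>x. (U x)\<^sup>2 + (V x)\<^sup>2"])
  show "integrable M (\<lambda>x. (U x)\<^sup>2 + (V x)\<^sup>2)" using assms by auto
  show "(\<lambda>x. U x * V x) \<in> borel_measurable M" by measurable
  show "AE x in M. norm (U x * V x) \<le> norm ((U x)\<^sup>2 + (V x)\<^sup>2)"
  proof (intro AE_I2)
    fix x
    have "2 * \<bar>U x\<bar> * \<bar>V x\<bar> \<le> \<bar>U x\<bar>\<^sup>2 + \<bar>V x\<bar>\<^sup>2"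
      by (rule sum_squares_bound)
    then have "2 * \<bar>U x * V x\<bar> \<le> (U x)\<^sup>2 + (V x)\<^sup>2" by (simp add: abs_mult)
    then show "norm (U x * V x) \<le> norm ((U x)\<^sup>2 + (V x)\<^sup>2)" by simp
  qed
qed

lemma (in prob_space) var_sum:
  fixes V :: "'i \<Rightarrow> 'a \<Rightarrow> real"
  assumes fin: "finite I"
    and meas: "\<And>k. k \<in> I \<Longrightarrow> V k \<in> borel_measurable M"
    and sq: "\<And>k. k \<in> I \<Longrightarrow> integrable M (\<lambda>x. (V k x)\<^sup>2)"
    and unc: "\<And>a b. a \<in> I \<Longrightarrow> b \<in> I \<Longrightarrow> a \<noteq> b \<Longrightarrow>
               (\<integral>x. V a x * V b x \<partial>M) = (\<integral>x. V a x \<partial>M) * (\<integral>x. V b x \<partial>M)"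
  shows "(\<integral>x. ((\<Sum>k\<in>I. V k x) - (\<Sum>k\<in>I. \<integral>y. V k y \<partial>M))\<^sup>2 \<partial>M)
       = (\<Sum>k\<in>I. (\<integral>x. (V k x)\<^sup>2 \<partial>M) - (\<integral>x. V k x \<partial>M)\<^sup>2)"
proof -
  define m where "m k = (\<integral>x. V k x \<partial>M)" for k
  have int: "integrable M (V k)" if "k \<in> I" for k
    using square_integrable_imp_integrable[OF meas[OF that] sq[OF that]] .
  have intp: "integrable M (\<lambda>x. V a x * V b x)" if "a \<in> I" "b \<in> I" for a b
    using sq_int_mult[OF meas[OF that(1)] meas[OF that(2)] sq[OF that(1)] sq[OF that(2)]] .
  have eq: "((\<Sum>k\<in>I. V k x) - (\<Sum>k\<in>I. m k))\<^sup>2 = (\<Sum>a\<in>I. \<Sum>b\<in>I. (V a x - m a) * (V b x - m b))" for x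
    by (simp add: power2_eq_square sum_subtractf[symmetric] sum_product)
  have intab: "integrable M (\<lambda>x. (V a x - m a) * (V b x - m b))" if "a \<in> I" "b \<in> I" for a b
  proof -
    have "(\<lambda>x. (V a x - m a) * (V b x - m b)) = (\<lambda>x. V a x * V b x - m b * V a x - m a * V b x + m a * m b)"
      by (auto simp: algebra_simps)
    then show ?thesis using intp[OF that] int[OF that(1)] int[OF that(2)] by simp
  qed
  have intab_val: "(\<integral>x. (V a x - m a) * (V b x - m b) \<partial>M) =
      (if a = b then (\<integral>x. (V a x)\<^sup>2 \<partial>M) - (m a)\<^sup>2 else 0)" if "a \<in> I" "b \<in> I" for a b
  proof -
    have "(\<lambda>x. (V a x - m a) * (V b x - m b)) = (\<lambda>x. V a x * V b x - m b * V a x - m a * V b x + m a * m b)"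
      by (auto simp: algebra_simps)
    then have "(\<integral>x. (V a x - m a) * (V b x - m b) \<partial>M) = (\<integral>x. V a x * V b x \<partial>M) - m b * m a - m a * m b + m a * m b"
      using intp[OF that] int[OF that(1)] int[OF that(2)] by (simp add: m_def prob_space)
    also have "\<dots> = (if a = b then (\<integral>x. (V a x)\<^sup>2 \<partial>M) - (m a)\<^sup>2 else 0)"
      using unc[OF that] by (auto simp: m_def power2_eq_square)
    finally show ?thesis .
  qed
  have "(\<integral>x. ((\<Sum>k\<in>I. V k x) - (\<Sum>k\<in>I. m k))\<^sup>2 \<partial>M)
      = (\<Sum>a\<in>I. \<Sum>b\<in>I. (\<integral>x. (V a x - m a) * (V b x - m b) \<partial>M))"
    unfolding eq using intab by (simp add: integral_sum integrable_sum)
  also have "\<dots> = (\<Sum>a\<in>I. (\<integral>x. (V a x)\<^sup>2 \<partial>M) - (m a)\<^sup>2)"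
  proof (rule sum.cong[OF refl])
    fix a assume a: "a \<in> I"
    have "(\<Sum>b\<in>I. (\<integral>x. (V a x - m a) * (V b x - m b) \<partial>M)) =
       (\<Sum>b\<in>I. if a = b then (\<integral>x. (V a x)\<^sup>2 \<partial>M) - (m a)\<^sup>2 else 0)"
      using a by (intro sum.cong[OF refl]) (rule intab_val)
    also have "\<dots> = (\<integral>x. (V a x)\<^sup>2 \<partial>M) - (m a)\<^sup>2"
      using a fin by (simp add: sum.delta)
    finally show "(\<Sum>b\<in>I. (\<integral>x. (V a x - m a) * (V b x - m b) \<partial>M)) = (\<integral>x. (V a x)\<^sup>2 \<partial>M) - (m a)\<^sup>2" .
  qed
  finally show ?thesis by (simp add: m_def)
qed



lemma (in prob_space) sum_sq_int:
  fixes V :: "'i \<Rightarrow> 'a \<Rightarrow> real"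
  assumes fin: "finite I"
    and meas: "\<And>k. k \<in> I \<Longrightarrow> V k \<in> borel_measurable M"
    and sq: "\<And>k. k \<in> I \<Longrightarrow> integrable M (\<lambda>x. (V k x)\<^sup>2)"
  shows "integrable M (\<lambda>x. (\<Sum>k\<in>I. V k x)\<^sup>2)"
proof (rule Bochner_Integration.integrable_bound[where f="\<lambda>x. (\<Sum>k\<in>I. (V k x)\<^sup>2) * real (card I)"])
  show "integrable M (\<lambda>x. (\<Sum>k\<in>I. (V k x)\<^sup>2) * real (card I))"
    using sq by auto
  show "(\<lambda>x. (\<Sum>k\<in>I. V k x)\<^sup>2) \<in> borel_measurable M" using meas by measurable
  show "AE x in M. norm ((\<Sum>k\<in>I. V k x)\<^sup>2) \<le> norm ((\<Sum>k\<in>I. (V k x)\<^sup>2) * real (card I))"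
    by (intro AE_I2) (simp add: sum_squared_le_sum_of_squares sum_nonneg)
qed

lemma (in prob_space) avg_moments:
  fixes V :: "'i \<Rightarrow> 'a \<Rightarrow> real" and c :: real
  assumes fin: "finite I"
    and meas: "\<And>k. k \<in> I \<Longrightarrow> V k \<in> borel_measurable M"
    and sq: "\<And>k. k \<in> I \<Longrightarrow> integrable M (\<lambda>x. (V k x)\<^sup>2)"
    and unc: "\<And>a b. a \<in> I \<Longrightarrow> b \<in> I \<Longrightarrow> a \<noteq> b \<Longrightarrow>
               (\<integral>x. V a x * V b x \<partial>M) = (\<integral>x. V a x \<partial>M) * (\<integral>x. V b x \<partial>M)"
  shows "rv_mean M (\<lambda>\<omega>. (\<Sum>k\<in>I. V k \<omega>) / c) = (\<Sum>k\<in>I. \<integral>x. V k x \<partial>M) / c"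
    and "rv_var M (\<lambda>\<omega>. (\<Sum>k\<in>I. V k \<omega>) / c) = (\<Sum>k\<in>I. (\<integral>x. (V k x)\<^sup>2 \<partial>M) - (\<integral>x. V k x \<partial>M)\<^sup>2) / c\<^sup>2"
proof -
  have int: "integrable M (V k)" if "k \<in> I" for k
    using square_integrable_imp_integrable[OF meas[OF that] sq[OF that]] .
  show m: "rv_mean M (\<lambda>\<omega>. (\<Sum>k\<in>I. V k \<omega>) / c) = (\<Sum>k\<in>I. \<integral>x. V k x \<partial>M) / c"
    unfolding rv_mean_def using int by (simp add: Bochner_Integration.integral_sum)
  have eq: "((\<Sum>k\<in>I. V k \<omega>) / c - (\<Sum>k\<in>I. \<integral>x. V k x \<partial>M) / c)\<^sup>2
     = ((\<Sum>k\<in>I. V k \<omega>) - (\<Sum>k\<in>I. \<integral>x. V k x \<partial>M))\<^sup>2 / c\<^sup>2" for \<omega>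
    by (simp add: power_divide diff_divide_distrib[symmetric])
  show "rv_var M (\<lambda>\<omega>. (\<Sum>k\<in>I. V k \<omega>) / c) = (\<Sum>k\<in>I. (\<integral>x. (V k x)\<^sup>2 \<partial>M) - (\<integral>x. V k x \<partial>M)\<^sup>2) / c\<^sup>2"
    unfolding rv_var_def m eq using var_sum[OF fin meas sq unc] by simp
qed



lemma (in prob_space) bc_quadratic:
  fixes T :: "nat \<Rightarrow> 'a \<Rightarrow> real"
  assumes meas: "\<And>k. T k \<in> borel_measurable M"
    and sq: "\<And>k. integrable M (\<lambda>x. (T k x)\<^sup>2)"
    and bnd: "\<And>k. (\<integral>x. (T k x)\<^sup>2 \<partial>M) \<le> K * (real (Suc k))\<^sup>2"
    and e: "e > 0"
  shows "AE x in M. eventually (\<lambda>k. \<bar>T k x\<bar> < e * (real (Suc k))\<^sup>2) sequentially"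
proof -
  define A where "A k = {x\<in>space M. e * (real (Suc k))\<^sup>2 \<le> \<bar>T k x\<bar>}" for k
  have Ameas[measurable]: "A k \<in> sets M" for k
    unfolding A_def using meas[of k] by measurable
  have Ab: "measure M (A k) \<le> (K / e\<^sup>2) * inverse ((real (Suc k))^2)" for k
  proof -
    have pos: "e * (real (Suc k))\<^sup>2 > 0" using e by simp
    have "measure M (A k) \<le> (\<integral>x. (T k x)^2 \<partial>M) / (e * (real (Suc k))\<^sup>2)\<^sup>2"
      unfolding A_def by (rule second_moment_method[OF meas sq pos])
    also have "\<dots> \<le> K * (real (Suc k))\<^sup>2 / (e * (real (Suc k))\<^sup>2)\<^sup>2"
      using bnd[of k] by (intro divide_right_mono) auto
    also have "\<dots> = (K / e\<^sup>2) * inverse ((real (Suc k))^2)"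
    proof -
      have r: "real (Suc k) > 0" by simp
      show ?thesis using e r
        by (simp add: power_mult_distrib divide_simps)
    qed
    finally show ?thesis .
  qed
  have s1: "summable (\<lambda>k. inverse ((real (Suc k))^2))"
    using inverse_power_summable[of 2, where 'a=real] summable_Suc_iff[where f="\<lambda>n. inverse (real n ^ 2)"]
    by simp
  have "summable (\<lambda>k. measure M (A k))"
  proof (rule summable_comparison_test[OF _ summable_mult[OF s1, of "K / e\<^sup>2"]])
    show "\<exists>N. \<forall>n\<ge>N. norm (measure M (A n)) \<le> K / e\<^sup>2 * inverse ((real (Suc n))\<^sup>2)"
      using Ab by auto
  qed
  then have "AE x in M. eventually (\<lambda>k. x \<in> space M - A k) sequentially"
    by (intro borel_cantelli_AE1) (auto simp: emeasure_eq_measure)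
  then show ?thesis
    by (rule AE_mp) (auto intro!: AE_I2 elim!: eventually_mono simp: A_def not_le)
qed

lemma (in prob_space) sum_sq_bound:
  fixes V :: "nat \<Rightarrow> 'a \<Rightarrow> real"
  assumes fin: "finite I"
    and meas: "\<And>k. V k \<in> borel_measurable M"
    and sq: "\<And>k. integrable M (\<lambda>x. (V k x)\<^sup>2)"
    and mean0: "\<And>k. (\<integral>x. V k x \<partial>M) = 0"
    and unc: "\<And>a b. a \<noteq> b \<Longrightarrow> (\<integral>x. V a x * V b x \<partial>M) = 0"
    and bnd: "\<And>k. (\<integral>x. (V k x)\<^sup>2 \<partial>M) \<le> C"
  shows "integrable M (\<lambda>x. (\<Sum>k\<in>I. V k x)\<^sup>2)"
    and "(\<integral>x. (\<Sum>k\<in>I. V k x)\<^sup>2 \<partial>M) \<le> real (card I) * C"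
proof -
  show "integrable M (\<lambda>x. (\<Sum>k\<in>I. V k x)\<^sup>2)"
  proof (rule Bochner_Integration.integrable_bound[where f="\<lambda>x. (\<Sum>k\<in>I. (V k x)\<^sup>2) * real (card I)"])
    show "integrable M (\<lambda>x. (\<Sum>k\<in>I. (V k x)\<^sup>2) * real (card I))"
      using sq by auto
    show "(\<lambda>x. (\<Sum>k\<in>I. V k x)\<^sup>2) \<in> borel_measurable M" using meas by measurable
    show "AE x in M. norm ((\<Sum>k\<in>I. V k x)\<^sup>2) \<le> norm ((\<Sum>k\<in>I. (V k x)\<^sup>2) * real (card I))"
      by (intro AE_I2) (simp add: sum_squared_le_sum_of_squares sum_nonneg)
  qed
  have "(\<integral>x. ((\<Sum>k\<in>I. V k x) - (\<Sum>k\<in>I. \<integral>y. V k y \<partial>M))\<^sup>2 \<partial>M)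
       = (\<Sum>k\<in>I. (\<integral>x. (V k x)\<^sup>2 \<partial>M) - (\<integral>x. V k x \<partial>M)\<^sup>2)"
    by (rule var_sum[OF fin meas sq]) (simp add: unc mean0)
  then have "(\<integral>x. (\<Sum>k\<in>I. V k x)\<^sup>2 \<partial>M) = (\<Sum>k\<in>I. (\<integral>x. (V k x)\<^sup>2 \<partial>M))"
    by (simp add: mean0)
  also have "\<dots> \<le> (\<Sum>k\<in>I. C)" by (rule sum_mono) (rule bnd)
  finally show "(\<integral>x. (\<Sum>k\<in>I. V k x)\<^sup>2 \<partial>M) \<le> real (card I) * C" by simp
qed



lemma floor_sqrt_facts:
  fixes N :: nat
  shows "(floor_sqrt N)\<^sup>2 \<le> N" "N < (Suc (floor_sqrt N))\<^sup>2"
  using floor_sqrt_power2_le Suc_floor_sqrt_power2_gt by auto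

lemma (in prob_space) slln_uncorr:
  fixes V :: "nat \<Rightarrow> 'a \<Rightarrow> real"
  assumes meas: "\<And>k. V k \<in> borel_measurable M"
    and sq: "\<And>k. integrable M (\<lambda>x. (V k x)\<^sup>2)"
    and mean0: "\<And>k. (\<integral>x. V k x \<partial>M) = 0"
    and unc: "\<And>a b. a \<noteq> b \<Longrightarrow> (\<integral>x. V a x * V b x \<partial>M) = 0"
    and bnd: "\<And>k. (\<integral>x. (V k x)\<^sup>2 \<partial>M) \<le> C"
  shows "AE x in M. (\<lambda>N. (\<Sum>k<N. V k x) / real N) \<longlonglongrightarrow> 0"
proof -
  have "0 \<le> (\<integral>x. (V 0 x)\<^sup>2 \<partial>M)" by (rule Bochner_Integration.integral_nonneg) simp
  then have C0: "0 \<le> C" using bnd[of 0] by linarith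
  define S where "S N x = (\<Sum>k<N. V k x)" for N x
  define J where "J k = {(Suc k)\<^sup>2..<(Suc (Suc k))\<^sup>2}" for k
  define D where "D k x = (\<Sum>l\<in>J k. \<bar>V l x\<bar>)" for k x
  have Smeas: "S N \<in> borel_measurable M" for N unfolding S_def using meas by measurable
  have Dmeas: "D k \<in> borel_measurable M" for k unfolding D_def using meas by measurable
  have cardJ: "real (card (J k)) \<le> 3 * real (Suc k)" for k
  proof -
    have "card (J k) = (Suc (Suc k))\<^sup>2 - (Suc k)\<^sup>2" by (simp add: J_def)
    also have "\<dots> = 2 * k + 3" by (simp add: power2_eq_square)
    finally show ?thesis by simp
  qed
  have SB: "AE x in M. eventually (\<lambda>k. \<bar>S ((Suc k)\<^sup>2) x\<bar> < e * (real (Suc k))\<^sup>2) sequentially"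
    if e: "e > 0" for e
  proof (rule bc_quadratic[where K=C, OF Smeas _ _ e])
    fix k
    show "integrable M (\<lambda>x. (S ((Suc k)\<^sup>2) x)\<^sup>2)"
      unfolding S_def by (rule sum_sq_bound(1)[OF _ meas sq mean0 unc bnd]) auto
    have "(\<integral>x. (S ((Suc k)\<^sup>2) x)\<^sup>2 \<partial>M) \<le> real (card {..<(Suc k)\<^sup>2}) * C"
      unfolding S_def by (rule sum_sq_bound(2)[OF _ meas sq mean0 unc bnd]) auto
    then show "(\<integral>x. (S ((Suc k)\<^sup>2) x)\<^sup>2 \<partial>M) \<le> C * (real (Suc k))\<^sup>2"
      by (simp add: mult.commute)
  qed
  have DB: "AE x in M. eventually (\<lambda>k. \<bar>D k x\<bar> < e * (real (Suc k))\<^sup>2) sequentially"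
    if e: "e > 0" for e
  proof (rule bc_quadratic[where K="9 * C", OF Dmeas _ _ e])
    fix k
    have fin: "finite (J k)" by (simp add: J_def)
    have bound: "(D k x)\<^sup>2 \<le> (\<Sum>l\<in>J k. (V l x)\<^sup>2) * real (card (J k))" for x
      using sum_squared_le_sum_of_squares[of "\<lambda>l. \<bar>V l x\<bar>" "J k"] by (simp add: D_def)
    have i2: "integrable M (\<lambda>x. (\<Sum>l\<in>J k. (V l x)\<^sup>2) * real (card (J k)))"
      using sq by auto
    show int: "integrable M (\<lambda>x. (D k x)\<^sup>2)"
    proof (rule Bochner_Integration.integrable_bound[OF i2])
      show "(\<lambda>x. (D k x)\<^sup>2) \<in> borel_measurable M" using Dmeas[of k] by measurable
      show "AE x in M. norm ((D k x)\<^sup>2) \<le> norm ((\<Sum>l\<in>J k. (V l x)\<^sup>2) * real (card (J k)))"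
        using bound by (intro AE_I2) (simp add: sum_nonneg)
    qed
    have "(\<integral>x. (D k x)\<^sup>2 \<partial>M) \<le> (\<integral>x. (\<Sum>l\<in>J k. (V l x)\<^sup>2) * real (card (J k)) \<partial>M)"
      by (rule integral_mono[OF int i2 bound])
    also have "\<dots> = (\<Sum>l\<in>J k. (\<integral>x. (V l x)\<^sup>2 \<partial>M)) * real (card (J k))"
      using sq by (simp add: integral_sum)
    also have "\<dots> \<le> (\<Sum>l\<in>J k. C) * real (card (J k))"
      by (intro mult_right_mono sum_mono bnd) auto
    also have "\<dots> = C * (real (card (J k)))\<^sup>2" by (simp add: power2_eq_square)
    also have "\<dots> \<le> C * (3 * real (Suc k))\<^sup>2"
      using cardJ[of k] C0 by (intro mult_left_mono power_mono) auto
    also have "\<dots> = 9 * C * (real (Suc k))\<^sup>2" by (simp add: power2_eq_square algebra_simps)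
    finally show "(\<integral>x. (D k x)\<^sup>2 \<partial>M) \<le> 9 * C * (real (Suc k))\<^sup>2" .
  qed
  have key: "eventually (\<lambda>N. \<bar>S N x / real N\<bar> \<le> 2 * e) sequentially"
    if e: "e > 0"
      and h1: "eventually (\<lambda>k. \<bar>S ((Suc k)\<^sup>2) x\<bar> < e * (real (Suc k))\<^sup>2) sequentially"
      and h2: "eventually (\<lambda>k. \<bar>D k x\<bar> < e * (real (Suc k))\<^sup>2) sequentially" for x e
  proof -
    from eventually_conj[OF h1 h2] obtain K1 where
      K1: "\<And>k. k \<ge> K1 \<Longrightarrow> \<bar>S ((Suc k)\<^sup>2) x\<bar> < e * (real (Suc k))\<^sup>2 \<and> \<bar>D k x\<bar> < e * (real (Suc k))\<^sup>2"
      unfolding eventually_sequentially by blast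
    show ?thesis unfolding eventually_sequentially
    proof (intro exI allI impI)
      fix N assume N: "(Suc K1)\<^sup>2 \<le> N"
      define q where "q = floor_sqrt N"
      have q1: "Suc K1 \<le> q" unfolding q_def using N by (intro le_floor_sqrtI) auto
      define k where "k = q - 1"
      have kq: "Suc k = q" "k \<ge> K1" using q1 by (auto simp: k_def)
      have lo: "q\<^sup>2 \<le> N" and hi: "N < (Suc q)\<^sup>2" using floor_sqrt_facts[of N] by (auto simp: q_def)
      have Npos: "N > 0" using N by (metis le_0_eq not_gr_zero zero_less_Suc zero_less_power power_not_zero nat.distinct(1) gr_zeroI)
      have split: "S N x = S (q\<^sup>2) x + (\<Sum>l\<in>{q\<^sup>2..<N}. V l x)"
        unfolding S_def using lo by (simp add: lessThan_atLeast0 sum.atLeastLessThan_concat)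
      have "\<bar>\<Sum>l\<in>{q\<^sup>2..<N}. V l x\<bar> \<le> (\<Sum>l\<in>{q\<^sup>2..<N}. \<bar>V l x\<bar>)" by (rule sum_abs)
      also have "\<dots> \<le> D k x" unfolding D_def J_def using hi kq
        by (intro sum_mono2) auto
      finally have r: "\<bar>\<Sum>l\<in>{q\<^sup>2..<N}. V l x\<bar> \<le> D k x" .
      have "\<bar>S N x\<bar> \<le> \<bar>S (q\<^sup>2) x\<bar> + \<bar>D k x\<bar>" using split r by linarith
      also have "\<dots> < 2 * e * (real q)\<^sup>2" using K1[OF kq(2)] kq(1) by auto
      also have "\<dots> \<le> 2 * e * real N" using lo e
        by (intro mult_left_mono) (auto simp flip: of_nat_power)
      finally have "\<bar>S N x\<bar> \<le> 2 * e * real N" by simp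
      then show "\<bar>S N x / real N\<bar> \<le> 2 * e" using Npos by (simp add: divide_simps)
    qed
  qed
  have "AE x in M. \<forall>r::nat. eventually (\<lambda>k. \<bar>S ((Suc k)\<^sup>2) x\<bar> < (1 / real (Suc r)) * (real (Suc k))\<^sup>2) sequentially
       \<and> eventually (\<lambda>k. \<bar>D k x\<bar> < (1 / real (Suc r)) * (real (Suc k))\<^sup>2) sequentially"
    unfolding AE_all_countable
    by (intro allI AE_conjI SB DB) auto
  then show ?thesis
  proof (rule AE_mp, intro AE_I2 impI)
    fix x assume H: "\<forall>r::nat. eventually (\<lambda>k. \<bar>S ((Suc k)\<^sup>2) x\<bar> < (1 / real (Suc r)) * (real (Suc k))\<^sup>2) sequentially
       \<and> eventually (\<lambda>k. \<bar>D k x\<bar> < (1 / real (Suc r)) * (real (Suc k))\<^sup>2) sequentially"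
    show "(\<lambda>N. (\<Sum>k<N. V k x) / real N) \<longlonglongrightarrow> 0"
    proof (rule LIMSEQ_I)
      fix r :: real assume r: "0 < r"
      obtain m0 :: nat where m0: "m0 > 0" "inverse (real m0) < r / 2" using ex_inverse_of_nat_less[of "r/2"] r by auto
      define m where "m = m0 - 1"
      have m: "inverse (real (Suc m)) < r / 2" using m0 by (simp add: m_def)
      have "eventually (\<lambda>N. \<bar>S N x / real N\<bar> \<le> 2 * (1 / real (Suc m))) sequentially"
        using H[rule_format, of m] by (intro key) auto
      then obtain no0 where no0: "\<forall>N\<ge>no0. \<bar>S N x / real N\<bar> \<le> 2 * (1 / real (Suc m))"
        unfolding eventually_sequentially by blast
      have lt: "2 * (1 / real (Suc m)) < r" using m by (simp add: field_simps)
      show "\<exists>no. \<forall>N\<ge>no. norm ((\<Sum>k<N. V k x) / real N - 0) < r"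
      proof (intro exI[of _ no0] allI impI)
        fix N assume "N \<ge> no0"
        then have "\<bar>S N x / real N\<bar> \<le> 2 * (1 / real (Suc m))" using no0 by blast
        then show "norm ((\<Sum>k<N. V k x) / real N - 0) < r" using lt by (simp add: S_def)
      qed
    qed
  qed
qed



lemma os_coeff_sum:
  fixes t :: nat and a :: real
  shows "(\<Sum>u\<in>{1..Suc t}. fact (Suc t) / (fact (u - 1) * fact (Suc t - u)) * a ^ (u - 1) * (1 - a) ^ (Suc t - u))
         = real (Suc t)"
proof -
  have "{1..Suc t} = Suc ` {..t}"
  proof
    show "{1..Suc t} \<subseteq> Suc ` {..t}"
    proof
      fix u assume "u \<in> {1..Suc t}"
      then have "u = Suc (u - 1)" "u - 1 \<in> {..t}" by auto
      then show "u \<in> Suc ` {..t}" by blast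
    qed
  qed auto
  then have "(\<Sum>u\<in>{1..Suc t}. fact (Suc t) / (fact (u - 1) * fact (Suc t - u)) * a ^ (u - 1) * (1 - a) ^ (Suc t - u))
     = (\<Sum>v\<le>t. fact (Suc t) / (fact v * fact (t - v)) * a ^ v * (1 - a) ^ (t - v))"
    by (simp add: sum.reindex)
  also have "\<dots> = (\<Sum>v\<le>t. real (Suc t) * (real (t choose v) * a ^ v * (1 - a) ^ (t - v)))"
  proof (rule sum.cong[OF refl])
    fix v assume "v \<in> {..t}"
    then have "real (t choose v) = fact t / (fact v * fact (t - v))" by (simp add: binomial_fact)
    then have c: "(fact (Suc t) :: real) / (fact v * fact (t - v)) = real (Suc t) * real (t choose v)"
      by (simp only: fact_Suc times_divide_eq_right of_nat_fact)
    show "fact (Suc t) / (fact v * fact (t - v)) * a ^ v * (1 - a) ^ (t - v)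
        = real (Suc t) * (real (t choose v) * a ^ v * (1 - a) ^ (t - v))"
      unfolding c by (simp add: mult.assoc)
  qed
  also have "\<dots> = real (Suc t) * (\<Sum>v\<le>t. real (t choose v) * a ^ v * (1 - a) ^ (t - v))"
    by (simp add: sum_distrib_left)
  also have "\<dots> = real (Suc t) * (a + (1 - a)) ^ t"
    by (simp only: binomial_ring)
  finally show ?thesis by simp
qed

lemma block_sum:
  fixes \<phi> :: "nat \<Rightarrow> real"
  shows "(\<Sum>k=1..n. \<Sum>u\<in>{(k - 1) * m + 1 .. k * m}. \<phi> u) = (\<Sum>u\<in>{1..n * m}. \<phi> u)"
proof (induction n)
  case 0 then show ?case by simp
next
  case (Suc n)
  have un: "{1..Suc n * m} = {1..n * m} \<union> {n * m + 1 .. Suc n * m}" by auto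
  have dj: "{1..n * m} \<inter> {n * m + 1 .. Suc n * m} = {}" by auto
  have "(\<Sum>k=1..Suc n. \<Sum>u\<in>{(k - 1) * m + 1 .. k * m}. \<phi> u)
      = (\<Sum>k=1..n. \<Sum>u\<in>{(k - 1) * m + 1 .. k * m}. \<phi> u) + (\<Sum>u\<in>{n * m + 1 .. Suc n * m}. \<phi> u)"
    by simp
  also have "\<dots> = (\<Sum>u\<in>{1..Suc n * m}. \<phi> u)"
    unfolding Suc.IH un by (rule sum.union_disjoint[symmetric]) (use dj in auto)
  finally show ?case .
qed

locale pros_setup =
  fixes f :: "real \<Rightarrow> real" and s n :: nat and \<alpha> :: "nat \<Rightarrow> nat \<Rightarrow> real"
  assumes f_meas[measurable]: "f \<in> borel_measurable lborel"
    and f_nonneg: "\<And>x. 0 \<le> f x"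
    and f_int: "(\<integral>\<^sup>+ x. ennreal (f x) \<partial>lborel) = 1"
    and n_pos: "1 \<le> n" and s_pos: "1 \<le> s" and n_dvd: "n dvd s"
    and alpha: "doubly_stochastic n \<alpha>"
begin

definition "P = density lborel (\<lambda>x. ennreal (f x))"
abbreviation "F \<equiv> cdf_of f"
abbreviation "m \<equiv> s div n"
abbreviation "g \<equiv> pros_density f s n \<alpha>"

lemma f_borel[measurable]: "f \<in> borel_measurable borel"
  using f_meas by simp

lemma P_prob: "prob_space P"
  by (rule prob_spaceI) (simp add: P_def emeasure_density f_int)

lemma sets_P[simp]: "sets P = sets borel" by (simp add: P_def)

lemma F_def': "F x = measure P {..x}"
  by (simp add: cdf_of_def P_def)

lemma F_bounds: "0 \<le> F x" "F x \<le> 1"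
proof -
  interpret prob_space P by (rule P_prob)
  show "0 \<le> F x" "F x \<le> 1" by (simp_all add: F_def')
qed

lemma F_mono: "mono F"
proof
  interpret prob_space P by (rule P_prob)
  fix x y :: real assume "x \<le> y"
  then show "F x \<le> F y" unfolding F_def' by (intro finite_measure_mono) auto
qed

lemma F_meas[measurable]: "F \<in> borel_measurable borel"
  by (rule borel_measurable_mono[OF F_mono])

lemma f_integrable: "integrable lborel f"
  by (rule integrableI_nn_integral_finite[where x=1]) (auto simp: f_nonneg f_int)

lemma f_integral: "(\<integral>x. f x \<partial>lborel) = 1"
  using f_int f_nonneg by (simp add: integral_eq_nn_integral)

lemma m_pos: "1 \<le> m" and s_eq: "s = n * m"
proof -
  show "s = n * m" using n_dvd by simp
  then show "1 \<le> m" using s_pos by (cases "m = 0") auto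
qed

lemma os_meas[measurable]: "os_density f s u \<in> borel_measurable borel"
  unfolding os_density_def by measurable

lemma os_nonneg: "0 \<le> os_density f s u x"
  unfolding os_density_def using F_bounds[of x] f_nonneg[of x]
  by (intro mult_nonneg_nonneg divide_nonneg_nonneg zero_le_power) auto

lemma os_le: "os_density f s u x \<le> fact s * f x"
proof -
  have c: "fact s / (fact (u - 1) * fact (s - u)) \<le> (fact s :: real)"
  proof -
    have "(1::real) \<le> fact (u - 1)" "(1::real) \<le> fact (s - u)" by (simp_all add: fact_ge_1)
    then have d: "1 \<le> (fact (u - 1) * fact (s - u) :: real)" by (metis mult_mono' mult_1 zero_le_one)
    have "fact s / (fact (u - 1) * fact (s - u)) \<le> (fact s :: real) / 1"
      by (rule divide_left_mono[OF d]) (use d in auto)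
    then show ?thesis by simp
  qed
  have p: "F x ^ (u - 1) * (1 - F x) ^ (s - u) \<le> 1"
    using F_bounds[of x] by (intro mult_le_one power_le_one) auto
  have "os_density f s u x = (fact s / (fact (u - 1) * fact (s - u))) * (F x ^ (u - 1) * (1 - F x) ^ (s - u)) * f x"
    by (simp add: os_density_def mult.assoc)
  also have "\<dots> \<le> fact s * 1 * f x"
    using c p F_bounds[of x] f_nonneg[of x]
    by (intro mult_right_mono mult_mono) auto
  finally show ?thesis by simp
qed

lemma os_sum: "(\<Sum>u\<in>{1..s}. os_density f s u x) = real s * f x"
proof -
  obtain t where t: "s = Suc t" using s_pos by (cases s) auto
  have "(\<Sum>u\<in>{1..s}. os_density f s u x)
      = (\<Sum>u\<in>{1..s}. fact s / (fact (u - 1) * fact (s - u)) * F x ^ (u - 1) * (1 - F x) ^ (s - u)) * f x"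
    by (simp add: os_density_def sum_distrib_right)
  also have "(\<Sum>u\<in>{1..s}. fact s / (fact (u - 1) * fact (s - u)) * F x ^ (u - 1) * (1 - F x) ^ (s - u)) = real s"
    unfolding t by (rule os_coeff_sum)
  finally show ?thesis .
qed

lemma alpha_nonneg: "j \<in> {1..n} \<Longrightarrow> k \<in> {1..n} \<Longrightarrow> 0 \<le> \<alpha> j k"
  using alpha by (simp add: doubly_stochastic_def)

lemma g_meas[measurable]: "g j \<in> borel_measurable borel"
  unfolding pros_density_def by measurable

lemma g_nonneg: "j \<in> {1..n} \<Longrightarrow> 0 \<le> g j x"
  unfolding pros_density_def using alpha_nonneg os_nonneg
  by (intro mult_nonneg_nonneg sum_nonneg) auto

definition "Cg j = (1 / real m) * (\<Sum>k=1..n. \<Sum>u\<in>pros_subset s n k. \<alpha> j k * fact s)"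

lemma g_le: "j \<in> {1..n} \<Longrightarrow> g j x \<le> Cg j * f x"
proof -
  assume j: "j \<in> {1..n}"
  have "g j x \<le> (1 / real m) * (\<Sum>k=1..n. \<Sum>u\<in>pros_subset s n k. \<alpha> j k * (fact s * f x))"
    unfolding pros_density_def using alpha_nonneg[OF j] os_le
    by (intro mult_left_mono sum_mono mult_left_mono) auto
  also have "\<dots> = Cg j * f x"
    by (simp add: Cg_def sum_distrib_right mult.assoc)
  finally show ?thesis .
qed

lemma g_sum: "(\<Sum>j=1..n. g j x) = real n * f x"
proof -
  have "(\<Sum>j=1..n. g j x) = (1 / real m) * (\<Sum>j=1..n. \<Sum>k=1..n. \<Sum>u\<in>pros_subset s n k. \<alpha> j k * os_density f s u x)"
    by (simp add: pros_density_def sum_distrib_left)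
  also have "(\<Sum>j=1..n. \<Sum>k=1..n. \<Sum>u\<in>pros_subset s n k. \<alpha> j k * os_density f s u x)
      = (\<Sum>k=1..n. \<Sum>u\<in>pros_subset s n k. (\<Sum>j=1..n. \<alpha> j k) * os_density f s u x)"
  proof -
    have "(\<Sum>j=1..n. \<Sum>k=1..n. \<Sum>u\<in>pros_subset s n k. \<alpha> j k * os_density f s u x)
       = (\<Sum>k=1..n. \<Sum>j=1..n. \<Sum>u\<in>pros_subset s n k. \<alpha> j k * os_density f s u x)"
      by (rule sum.swap)
    also have "\<dots> = (\<Sum>k=1..n. \<Sum>u\<in>pros_subset s n k. \<Sum>j=1..n. \<alpha> j k * os_density f s u x)"
      by (rule sum.cong[OF refl]) (rule sum.swap)
    also have "\<dots> = (\<Sum>k=1..n. \<Sum>u\<in>pros_subset s n k. (\<Sum>j=1..n. \<alpha> j k) * os_density f s u x)"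
      by (simp add: sum_distrib_right)
    finally show ?thesis .
  qed
  also have "\<dots> = (\<Sum>k=1..n. \<Sum>u\<in>pros_subset s n k. os_density f s u x)"
    using alpha by (intro sum.cong refl) (simp add: doubly_stochastic_def)
  also have "\<dots> = (\<Sum>u\<in>{1..n * m}. os_density f s u x)"
    unfolding pros_subset_def by (rule block_sum)
  also have "\<dots> = real s * f x" using os_sum s_eq by simp
  finally have e: "(\<Sum>j=1..n. g j x) = (1 / real m) * (real s * f x)" .
  have rs: "real s = real n * real m" using s_eq by (metis of_nat_mult)
  have "real m > 0" using m_pos by simp
  then show ?thesis unfolding e rs by (simp add: field_simps)
qed

end



context pros_setup begin

lemma F_one_null: "AE x in lborel. F x = 1 \<longrightarrow> f x = 0"
proof -
  interpret prob_space P by (rule P_prob)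
  define T where "T = {x. F x = 1}"
  define Q where "Q = {q \<in> \<rat>. F q = 1}"
  have Tsets: "T \<in> sets P" unfolding T_def by (simp add: pred_def[symmetric]) measurable
  have q_null: "{q<..} \<in> null_sets P" if "q \<in> Q" for q
  proof -
    have "measure P {q<..} = 1 - measure P {..q}"
    proof -
      have "{q<..} = space P - {..q}" by (auto simp: P_def)
      then show ?thesis using prob_compl[of "{..q}"] by (simp add: P_def)
    qed
    also have "\<dots> = 0" using that by (simp add: Q_def F_def')
    finally have "emeasure P {q<..} = 0" using emeasure_eq_measure[of "{q<..}"] by simp
    then show ?thesis by (simp add: null_sets_def)
  qed
  have pt_null: "{a} \<in> null_sets P" for a
  proof -
    have "{a} \<in> null_sets lborel" by (simp add: null_sets_def)
    then have "AE x in lborel. x \<notin> {a}" by (rule AE_not_in)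
    then have "AE x in lborel. x \<in> {a} \<longrightarrow> ennreal (f x) = 0"
      by (rule AE_mp) (auto intro!: AE_I2)
    then show ?thesis unfolding P_def
      by (subst null_sets_density_iff) auto
  qed
  have cover: "T \<subseteq> (\<Union>q\<in>Q. {q<..}) \<union> {Inf T}"
  proof
    fix x assume x: "x \<in> T"
    show "x \<in> (\<Union>q\<in>Q. {q<..}) \<union> {Inf T}"
    proof (cases "\<exists>y\<in>T. y < x")
      case True
      then obtain y where y: "y \<in> T" "y < x" by blast
      obtain q where q: "q \<in> \<rat>" "y < q" "q < x" using Rats_dense_in_real[OF y(2)] by blast
      have "F y \<le> F q" using F_mono q(2) by (auto simp: mono_def)
      then have "F q = 1" using y(1) F_bounds[of q] by (auto simp: T_def)
      then show ?thesis using q by (auto simp: Q_def)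
    next
      case False
      then have "Inf T = x" using x by (intro cInf_eq_minimum) (auto simp: not_less)
      then show ?thesis by auto
    qed
  qed
  have "(\<Union>q\<in>Q. {q<..}) \<union> {Inf T} \<in> null_sets P"
  proof (rule null_sets.Un)
    show "(\<Union>q\<in>Q. {q<..}) \<in> null_sets P"
      by (rule null_sets_UN'[OF _ q_null]) (auto simp: Q_def intro: countable_subset[OF _ countable_rat])
  qed (rule pt_null)
  then have "T \<in> null_sets P" by (rule null_sets_subset[OF _ Tsets cover])
  then have "AE x in lborel. x \<in> T \<longrightarrow> ennreal (f x) = 0"
    unfolding P_def by (subst (asm) null_sets_density_iff) auto
  then show ?thesis
    by (rule AE_mp) (auto intro!: AE_I2 simp: T_def f_nonneg)
qed

end



lemma abs_le_1_sq: "\<bar>y::real\<bar> \<le> 1 + y\<^sup>2"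
proof (cases "\<bar>y\<bar> \<le> 1")
  case True then show ?thesis by (smt (verit) zero_le_power2)
next
  case False
  then have "\<bar>y\<bar> * 1 \<le> \<bar>y\<bar> * \<bar>y\<bar>" by (intro mult_left_mono) auto
  then show ?thesis by (simp add: power2_eq_square abs_mult_self_eq)
qed

locale pros_h = pros_setup +
  fixes h :: "real \<Rightarrow> real"
  assumes h_meas[measurable]: "h \<in> borel_measurable borel"
    and h_mom: "integrable lborel (\<lambda>x. f x * (h x)\<^sup>2)"
    and g_int1: "\<And>j. j \<in> {1..n} \<Longrightarrow> (\<integral>x. g j x \<partial>lborel) = 1"
begin

definition "mu = (\<integral>x. f x * h x \<partial>lborel)"
definition "nu = (\<integral>x. f x * (h x)\<^sup>2 \<partial>lborel)"
definition "muj j = (\<integral>x. g j x * h x \<partial>lborel)"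
definition "nuj j = (\<integral>x. g j x * (h x)\<^sup>2 \<partial>lborel)"

lemma fh_int: "integrable lborel (\<lambda>x. f x * h x)"
proof (rule Bochner_Integration.integrable_bound[where f="\<lambda>x. f x + f x * (h x)\<^sup>2"])
  show "integrable lborel (\<lambda>x. f x + f x * (h x)\<^sup>2)" using f_integrable h_mom by auto
  show "(\<lambda>x. f x * h x) \<in> borel_measurable lborel" by measurable
  show "AE x in lborel. norm (f x * h x) \<le> norm (f x + f x * (h x)\<^sup>2)"
  proof (intro AE_I2)
    fix x
    have "\<bar>h x\<bar> \<le> 1 + (h x)\<^sup>2" by (rule abs_le_1_sq)
    then have "f x * \<bar>h x\<bar> \<le> f x * (1 + (h x)\<^sup>2)" using f_nonneg[of x] by (intro mult_left_mono) auto
    then show "norm (f x * h x) \<le> norm (f x + f x * (h x)\<^sup>2)"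
      using f_nonneg[of x] by (simp add: abs_mult algebra_simps)
  qed
qed

lemma Cg_nonneg: "j \<in> {1..n} \<Longrightarrow> 0 \<le> Cg j"
  unfolding Cg_def using alpha_nonneg by (intro mult_nonneg_nonneg sum_nonneg) auto

lemma g_integrable: "j \<in> {1..n} \<Longrightarrow> integrable lborel (g j)"
proof -
  assume j: "j \<in> {1..n}"
  show ?thesis
  proof (rule Bochner_Integration.integrable_bound[where f="\<lambda>x. Cg j * f x"])
    show "integrable lborel (\<lambda>x. Cg j * f x)" using f_integrable by auto
    show "g j \<in> borel_measurable lborel" by simp
    show "AE x in lborel. norm (g j x) \<le> norm (Cg j * f x)"
    proof (intro AE_I2)
      fix x
      have "0 \<le> Cg j * f x" using Cg_nonneg[OF j] f_nonneg[of x] by simp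
      then show "norm (g j x) \<le> norm (Cg j * f x)" using g_le[OF j, of x] g_nonneg[OF j, of x] by simp
    qed
  qed
qed

lemma gh2_int: "j \<in> {1..n} \<Longrightarrow> integrable lborel (\<lambda>x. g j x * (h x)\<^sup>2)"
proof -
  assume j: "j \<in> {1..n}"
  show ?thesis
  proof (rule Bochner_Integration.integrable_bound[where f="\<lambda>x. Cg j * (f x * (h x)\<^sup>2)"])
    show "integrable lborel (\<lambda>x. Cg j * (f x * (h x)\<^sup>2))" using h_mom by auto
    show "(\<lambda>x. g j x * (h x)\<^sup>2) \<in> borel_measurable lborel" by measurable
    show "AE x in lborel. norm (g j x * (h x)\<^sup>2) \<le> norm (Cg j * (f x * (h x)\<^sup>2))"
    proof (intro AE_I2)
      fix x
      have "g j x * (h x)\<^sup>2 \<le> Cg j * f x * (h x)\<^sup>2"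
        using g_le[OF j, of x] by (intro mult_right_mono) auto
      then show "norm (g j x * (h x)\<^sup>2) \<le> norm (Cg j * (f x * (h x)\<^sup>2))"
        using g_nonneg[OF j, of x] Cg_nonneg[OF j] f_nonneg[of x] by (simp add: abs_mult mult.assoc)
    qed
  qed
qed

lemma gh_int: "j \<in> {1..n} \<Longrightarrow> integrable lborel (\<lambda>x. g j x * h x)"
proof -
  assume j: "j \<in> {1..n}"
  show ?thesis
  proof (rule Bochner_Integration.integrable_bound[where f="\<lambda>x. g j x + g j x * (h x)\<^sup>2"])
    show "integrable lborel (\<lambda>x. g j x + g j x * (h x)\<^sup>2)" using g_integrable[OF j] gh2_int[OF j] by auto
    show "(\<lambda>x. g j x * h x) \<in> borel_measurable lborel" by measurable
    show "AE x in lborel. norm (g j x * h x) \<le> norm (g j x + g j x * (h x)\<^sup>2)"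
    proof (intro AE_I2)
      fix x
      have "\<bar>h x\<bar> \<le> 1 + (h x)\<^sup>2" by (rule abs_le_1_sq)
      then have "g j x * \<bar>h x\<bar> \<le> g j x * (1 + (h x)\<^sup>2)" using g_nonneg[OF j, of x] by (intro mult_left_mono) auto
      then show "norm (g j x * h x) \<le> norm (g j x + g j x * (h x)\<^sup>2)"
        using g_nonneg[OF j, of x] by (simp add: abs_mult algebra_simps)
    qed
  qed
qed

end



context pros_h begin

lemma sum_muj: "(\<Sum>j=1..n. muj j) = real n * mu"
proof -
  have "(\<integral>x. (\<Sum>j=1..n. g j x * h x) \<partial>lborel) = (\<Sum>j=1..n. muj j)"
    unfolding muj_def by (rule Bochner_Integration.integral_sum[where I="{1..n}" and M=lborel and f="\<lambda>j x. g j x * h x"]) (auto intro: gh_int)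
  then have "(\<Sum>j=1..n. muj j) = (\<integral>x. (\<Sum>j=1..n. g j x * h x) \<partial>lborel)" by simp
  also have "\<dots> = (\<integral>x. real n * (f x * h x) \<partial>lborel)"
    by (simp only: sum_distrib_right[symmetric] g_sum mult.assoc)
  finally show ?thesis by (simp add: mu_def)
qed

lemma sum_nuj: "(\<Sum>j=1..n. nuj j) = real n * nu"
proof -
  have "(\<integral>x. (\<Sum>j=1..n. g j x * (h x)\<^sup>2) \<partial>lborel) = (\<Sum>j=1..n. nuj j)"
    unfolding nuj_def by (rule Bochner_Integration.integral_sum[where I="{1..n}" and M=lborel and f="\<lambda>j x. g j x * (h x)\<^sup>2"]) (auto intro: gh2_int)
  then have "(\<Sum>j=1..n. nuj j) = (\<integral>x. (\<Sum>j=1..n. g j x * (h x)\<^sup>2) \<partial>lborel)" by simp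
  also have "\<dots> = (\<integral>x. real n * (f x * (h x)\<^sup>2) \<partial>lborel)"
    by (simp only: sum_distrib_right[symmetric] g_sum mult.assoc)
  finally show ?thesis by (simp add: nu_def)
qed

lemma var_ineq: "(\<Sum>j=1..n. nuj j - (muj j)\<^sup>2) \<le> real n * (nu - mu\<^sup>2)"
proof -
  have "(\<Sum>j=1..n. muj j)\<^sup>2 \<le> (\<Sum>j=1..n. (muj j)\<^sup>2) * real (card {1..n})"
    by (rule sum_squared_le_sum_of_squares)
  then have "(real n * mu)\<^sup>2 \<le> (\<Sum>j=1..n. (muj j)\<^sup>2) * real n"
    unfolding sum_muj by simp
  then have "real n * mu\<^sup>2 \<le> (\<Sum>j=1..n. (muj j)\<^sup>2)"
    using n_pos by (simp add: power2_eq_square algebra_simps)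
  moreover have "(\<Sum>j=1..n. nuj j - (muj j)\<^sup>2) = (\<Sum>j=1..n. nuj j) - (\<Sum>j=1..n. (muj j)\<^sup>2)"
    by (rule sum_subtractf)
  moreover have "real n * (nu - mu\<^sup>2) = real n * nu - real n * mu\<^sup>2" by (simp add: algebra_simps)
  ultimately show ?thesis using sum_nuj by linarith
qed

lemma centered_int:
  assumes j: "j \<in> {1..n}"
  shows "integrable lborel (\<lambda>x. g j x * (h x - c)\<^sup>2)"
    and "(\<integral>x. g j x * (h x - c)\<^sup>2 \<partial>lborel) = nuj j - 2 * c * muj j + c\<^sup>2"
proof -
  have eq: "(\<lambda>x. g j x * (h x - c)\<^sup>2) = (\<lambda>x. g j x * (h x)\<^sup>2 - 2 * c * (g j x * h x) + c\<^sup>2 * g j x)"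
    by (auto simp: power2_eq_square algebra_simps)
  show "integrable lborel (\<lambda>x. g j x * (h x - c)\<^sup>2)"
    unfolding eq using gh2_int[OF j] gh_int[OF j] g_integrable[OF j] by auto
  show "(\<integral>x. g j x * (h x - c)\<^sup>2 \<partial>lborel) = nuj j - 2 * c * muj j + c\<^sup>2"
    unfolding eq using gh2_int[OF j] gh_int[OF j] g_integrable[OF j] g_int1[OF j]
    by (simp add: nuj_def muj_def)
qed

lemma f_centered_int:
  shows "integrable lborel (\<lambda>x. f x * (h x - c)\<^sup>2)"
    and "(\<integral>x. f x * (h x - c)\<^sup>2 \<partial>lborel) = nu - 2 * c * mu + c\<^sup>2"
proof -
  have eq: "(\<lambda>x. f x * (h x - c)\<^sup>2) = (\<lambda>x. f x * (h x)\<^sup>2 - 2 * c * (f x * h x) + c\<^sup>2 * f x)"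
    by (auto simp: power2_eq_square algebra_simps)
  show "integrable lborel (\<lambda>x. f x * (h x - c)\<^sup>2)"
    unfolding eq using h_mom fh_int f_integrable by auto
  show "(\<integral>x. f x * (h x - c)\<^sup>2 \<partial>lborel) = nu - 2 * c * mu + c\<^sup>2"
    unfolding eq using h_mom fh_int f_integrable f_integral
    by (simp add: nu_def mu_def)
qed

lemma varj_nonneg: "j \<in> {1..n} \<Longrightarrow> 0 \<le> nuj j - (muj j)\<^sup>2"
proof -
  assume j: "j \<in> {1..n}"
  have "0 \<le> (\<integral>x. g j x * (h x - muj j)\<^sup>2 \<partial>lborel)"
    using g_nonneg[OF j] by (intro Bochner_Integration.integral_nonneg) auto
  then show ?thesis using centered_int(2)[OF j, of "muj j"] by (simp add: power2_eq_square)
qed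

lemma var_pos:
  assumes pos: "0 < (\<integral>x. f x * (h x - mu)\<^sup>2 \<partial>lborel)"
  shows "0 < (\<Sum>j=1..n. nuj j - (muj j)\<^sup>2)"
proof (rule ccontr)
  assume "\<not> ?thesis"
  then have z: "(\<Sum>j=1..n. nuj j - (muj j)\<^sup>2) = 0"
    using varj_nonneg by (smt (verit) sum_nonneg)
  have "(\<Sum>j=1..n. \<alpha> j 1) = 1" using alpha n_pos by (simp add: doubly_stochastic_def)
  then obtain j0 where j0: "j0 \<in> {1..n}" "\<alpha> j0 1 \<noteq> 0"
    by (metis (no_types, lifting) sum.neutral zero_neq_one)
  have a0: "0 < \<alpha> j0 1" using j0 alpha_nonneg[OF j0(1), of 1] n_pos by auto
  have "\<forall>j\<in>{1..n}. nuj j - (muj j)\<^sup>2 = 0"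
    using z varj_nonneg by (subst (asm) sum_nonneg_eq_0_iff) auto
  then have "nuj j0 - (muj j0)\<^sup>2 = 0" using j0(1) by blast
  define c where "c = muj j0"
  have "(\<integral>x. g j0 x * (h x - c)\<^sup>2 \<partial>lborel) = 0"
    using centered_int(2)[OF j0(1), of c] \<open>nuj j0 - (muj j0)\<^sup>2 = 0\<close>
    by (simp add: c_def power2_eq_square)
  then have ae1: "AE x in lborel. g j0 x * (h x - c)\<^sup>2 = 0"
    using centered_int(1)[OF j0(1), of c] g_nonneg[OF j0(1)]
    by (subst (asm) integral_nonneg_eq_0_iff_AE) auto
  have glow: "(1 / real m) * (\<alpha> j0 1 * os_density f s 1 x) \<le> g j0 x" for x
  proof -
    have one: "1 \<in> pros_subset s n 1" using m_pos by (simp add: pros_subset_def)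
    have "\<alpha> j0 1 * os_density f s 1 x \<le> (\<Sum>u\<in>pros_subset s n 1. \<alpha> j0 1 * os_density f s u x)"
      using one alpha_nonneg[OF j0(1), of 1] n_pos os_nonneg
      by (intro member_le_sum) (auto simp: pros_subset_def)
    also have "\<dots> \<le> (\<Sum>k=1..n. \<Sum>u\<in>pros_subset s n k. \<alpha> j0 k * os_density f s u x)"
      using n_pos alpha_nonneg[OF j0(1)] os_nonneg
      by (intro member_le_sum[where f="\<lambda>k. \<Sum>u\<in>pros_subset s n k. \<alpha> j0 k * os_density f s u x"] sum_nonneg)
         (auto simp: pros_subset_def)
    finally show ?thesis unfolding pros_density_def using m_pos
      by (intro mult_left_mono) auto
  qed
  have ospos: "0 < os_density f s 1 x" if "F x < 1" "0 < f x" for x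
    using that by (simp add: os_density_def)
  have ae2: "AE x in lborel. f x * (h x - c)\<^sup>2 = 0"
    using ae1 F_one_null
  proof eventually_elim
    case (elim x)
    show ?case
    proof (cases "f x = 0")
      case False
      then have fp: "0 < f x" using f_nonneg[of x] by simp
      then have "F x < 1" using elim(2) F_bounds[of x] by fastforce
      then have "0 < (1 / real m) * (\<alpha> j0 1 * os_density f s 1 x)"
        using ospos fp a0 m_pos by simp
      then have "0 < g j0 x" using glow[of x] by linarith
      then have "(h x - c)\<^sup>2 = 0" using elim(1) by simp
      then show ?thesis by simp
    qed simp
  qed
  have "(\<integral>x. f x * (h x - c)\<^sup>2 \<partial>lborel) = 0"
    by (rule integral_eq_zero_AE[OF ae2])
  moreover have "(\<integral>x. f x * (h x - mu)\<^sup>2 \<partial>lborel) \<le> (\<integral>x. f x * (h x - c)\<^sup>2 \<partial>lborel)"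
  proof -
    have "(mu - c)\<^sup>2 = mu\<^sup>2 + c\<^sup>2 - 2 * mu * c" by (rule power2_diff)
    moreover have "0 \<le> (mu - c)\<^sup>2" by simp
    moreover have "mu * mu = mu\<^sup>2" "c * mu = mu * c" by (simp_all add: power2_eq_square)
    ultimately show ?thesis unfolding f_centered_int(2) by linarith
  qed
  ultimately show False using pos by linarith
qed

end



lemma (in prob_space) block_iid:
  fixes XX :: "nat \<times> nat \<Rightarrow> 'a \<Rightarrow> real" and Mk :: "nat \<Rightarrow> real measure"
    and G0 :: "(nat \<Rightarrow> real) \<Rightarrow> real"
  assumes indep: "indep_vars (\<lambda>_. borel) XX ({1..n} \<times> {1..})"
    and dist: "\<And>j i. j \<in> {1..n} \<Longrightarrow> 1 \<le> i \<Longrightarrow> distr M borel (XX (j, i)) = Mk j"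
    and n: "1 \<le> n"
    and G0: "G0 \<in> borel_measurable (PiM {1..n} (\<lambda>_. borel))"
  shows "indep_vars (\<lambda>_. borel) (\<lambda>i \<omega>. G0 (\<lambda>j\<in>{1..n}. XX (j, Suc i) \<omega>)) UNIV"
    and "\<And>i. distr M borel (\<lambda>\<omega>. G0 (\<lambda>j\<in>{1..n}. XX (j, Suc i) \<omega>)) = distr (PiM {1..n} Mk) borel G0"
proof -
  define Ind where "Ind = {1..n} \<times> {1::nat..}"
  define K where "K i = {1..n} \<times> {Suc i}" for i :: nat
  define R where "R i = (\<lambda>\<omega>. \<lambda>k\<in>K i. XX k \<omega>)" for i
  define \<rho> where "\<rho> i = (\<lambda>v. \<lambda>j\<in>{1..n}. v (j, Suc i) :: real)" for i
  have KI: "K i \<subseteq> Ind" for i by (auto simp: K_def Ind_def)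
  have rvXX: "k \<in> Ind \<Longrightarrow> random_variable borel (XX k)" for k
    using indep by (auto simp: indep_vars_def Ind_def)
  have ind_R: "indep_vars (\<lambda>i. PiM (K i) (\<lambda>_. borel)) R UNIV"
    unfolding R_def
    by (rule indep_vars_restrict[OF indep]) (auto simp: K_def disjoint_family_on_def)
  have R_meas: "R i \<in> measurable M (PiM (K i) (\<lambda>_. borel))" for i
    using ind_R by (auto simp: indep_vars_def)
  have rho_meas: "\<rho> i \<in> measurable (PiM (K i) N) (PiM {1..n} (\<lambda>j. N (j, Suc i)))" for i N
    unfolding \<rho>_def
    by (rule measurable_restrict) (auto simp: K_def intro!: measurable_component_singleton)
  have comp_meas: "(\<lambda>v. G0 (\<rho> i v)) \<in> measurable (PiM (K i) (\<lambda>_. borel)) borel" for i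
    using measurable_compose[OF rho_meas[of i "\<lambda>_. borel"] G0] by (simp add: comp_def)
  have eqfun: "G0 (\<lambda>j\<in>{1..n}. XX (j, Suc i) \<omega>) = G0 (\<rho> i (R i \<omega>))" for i \<omega>
  proof -
    have "(\<lambda>j\<in>{1..n}. XX (j, Suc i) \<omega>) = \<rho> i (R i \<omega>)"
      by (auto simp: \<rho>_def R_def K_def restrict_def fun_eq_iff)
    then show ?thesis by simp
  qed
  have fe: "(\<lambda>i \<omega>. G0 (\<lambda>j\<in>{1..n}. XX (j, Suc i) \<omega>)) = (\<lambda>i \<omega>. G0 (\<rho> i (R i \<omega>)))"
    by (intro ext) (rule eqfun)
  show "indep_vars (\<lambda>_. borel) (\<lambda>i \<omega>. G0 (\<lambda>j\<in>{1..n}. XX (j, Suc i) \<omega>)) UNIV"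
    unfolding fe by (rule indep_vars_compose2[OF ind_R comp_meas])
  fix i
  define XX' where "XX' k = (if k \<in> Ind then XX k else (\<lambda>_. 0))" for k
  have rv': "random_variable borel (XX' k)" for k
    using rvXX by (auto simp: XX'_def)
  have ind': "indep_vars (\<lambda>_. borel) XX' (K i)"
  proof -
    have "indep_vars (\<lambda>_. borel) XX (K i)"
      using indep_vars_subset[OF indep] KI by (simp add: Ind_def)
    then show ?thesis
      using KI by (subst indep_vars_cong[where Y=XX and N'="\<lambda>_. borel"]) (auto simp: XX'_def)
  qed
  have Kne: "K i \<noteq> {}" using n by (auto simp: K_def)
  have Mk_dist: "Mk (fst k) = distr M borel (XX' k)" if "k \<in> K i" for k
    using that dist[of "fst k" "snd k"] by (auto simp: K_def XX'_def Ind_def)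
  have Mk_prob: "prob_space (Mk j)" if "j \<in> {1..n}" for j
    using dist[OF that, of 1] prob_space_distr[OF rvXX[of "(j,1)"]] that by (auto simp: Ind_def)
  have Mk_sets: "sets (Mk j) = sets borel" if "j \<in> {1..n}" for j
  proof -
    have "distr M borel (XX (j, 1)) = Mk j" using dist[OF that, of 1] by simp
    then show ?thesis by (metis sets_distr)
  qed
  have R_eq: "R i \<omega> = (\<lambda>k\<in>K i. XX' k \<omega>)" for \<omega>
    using KI by (auto simp: R_def XX'_def restrict_def fun_eq_iff)
  have "distr M (PiM (K i) (\<lambda>_. borel)) (R i) = distr M (PiM (K i) (\<lambda>_. borel)) (\<lambda>\<omega>. \<lambda>k\<in>K i. XX' k \<omega>)"
    by (intro distr_cong) (auto simp: R_eq)
  also have "\<dots> = (PiM (K i) (\<lambda>k. distr M borel (XX' k)))"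
    using indep_vars_iff_distr_eq_PiM[OF Kne, where M'="\<lambda>_. borel" and X=XX'] rv' ind' by simp
  also have "\<dots> = PiM (K i) (\<lambda>k. Mk (fst k))"
    by (intro PiM_cong) (auto simp: Mk_dist)
  finally have dR: "distr M (PiM (K i) (\<lambda>_. borel)) (R i) = PiM (K i) (\<lambda>k. Mk (fst k))" .
  have "distr (PiM (K i) (\<lambda>k. Mk (fst k))) (PiM {1..n} (\<lambda>j. Mk (fst (j, Suc i)))) (\<rho> i) = PiM {1..n} (\<lambda>j. Mk (fst (j, Suc i)))"
    unfolding \<rho>_def
    by (rule distr_PiM_reindex) (auto simp: K_def inj_on_def intro!: Mk_prob)
  then have dRho: "distr (PiM (K i) (\<lambda>k. Mk (fst k))) (PiM {1..n} Mk) (\<rho> i) = PiM {1..n} Mk" by simp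
  have setsK: "sets (PiM (K i) (\<lambda>k. Mk (fst k))) = sets (PiM (K i) (\<lambda>_. borel))"
    by (rule sets_PiM_cong) (auto simp: K_def Mk_sets)
  have setsN: "sets (PiM {1..n} Mk) = sets (PiM {1..n} (\<lambda>_. borel))"
    by (rule sets_PiM_cong) (auto simp: Mk_sets)
  have G0': "G0 \<in> borel_measurable (PiM {1..n} Mk)"
    by (subst measurable_cong_sets[OF setsN refl]) (rule G0)
  have rho': "\<rho> i \<in> measurable (PiM (K i) (\<lambda>k. Mk (fst k))) (PiM {1..n} Mk)"
    using rho_meas[of i "\<lambda>k. Mk (fst k)"] by simp
  have R': "R i \<in> measurable M (PiM (K i) (\<lambda>k. Mk (fst k)))"
    by (subst measurable_cong_sets[OF refl setsK]) (rule R_meas)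
  have "distr M borel (\<lambda>\<omega>. G0 (\<lambda>j\<in>{1..n}. XX (j, Suc i) \<omega>)) = distr M borel (G0 \<circ> \<rho> i \<circ> R i)"
    by (rule distr_cong[OF refl refl]) (simp only: comp_apply eqfun)
  also have "\<dots> = distr (distr M (PiM (K i) (\<lambda>k. Mk (fst k))) (R i)) borel (G0 \<circ> \<rho> i)"
    by (rule distr_distr[symmetric]) (auto intro: measurable_comp[OF rho' G0'] R')
  also have "distr M (PiM (K i) (\<lambda>k. Mk (fst k))) (R i) = PiM (K i) (\<lambda>k. Mk (fst k))"
    using dR by (subst distr_cong[OF refl setsK refl])
  also have "distr (PiM (K i) (\<lambda>k. Mk (fst k))) borel (G0 \<circ> \<rho> i)
     = distr (distr (PiM (K i) (\<lambda>k. Mk (fst k))) (PiM {1..n} Mk) (\<rho> i)) borel G0"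
    by (rule distr_distr[symmetric, OF G0' rho'])
  also have "\<dots> = distr (PiM {1..n} Mk) borel G0" by (simp only: dRho)
  finally show "distr M borel (\<lambda>\<omega>. G0 (\<lambda>j\<in>{1..n}. XX (j, Suc i) \<omega>)) = distr (PiM {1..n} Mk) borel G0" .
qed



theorem theorem2p1:
  fixes f h :: "real \<Rightarrow> real"
    and s n :: nat
    and \<alpha> :: "nat \<Rightarrow> nat \<Rightarrow> real"
    and M :: "'a measure"
    and X :: "nat \<Rightarrow> nat \<Rightarrow> 'a \<Rightarrow> real"
  assumes f_meas: "f \<in> borel_measurable lborel"
    and f_nonneg: "\<And>x. 0 \<le> f x"
    and f_int: "(\<integral>\<^sup>+ x. ennreal (f x) \<partial>lborel) = 1"
    and n_pos: "1 \<le> n" and s_pos: "1 \<le> s" and n_dvd: "n dvd s"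
    and alpha: "doubly_stochastic n \<alpha>"
    and h_meas: "h \<in> borel_measurable borel"
    and h_mom: "integrable lborel (\<lambda>x. f x * (h x)\<^sup>2)"
    and M: "prob_space M"
    and X_indep: "prob_space.indep_vars M (\<lambda>_. borel) (\<lambda>(j, i). X j i) ({1..n} \<times> {1..})"
    and X_distr: "\<And>j i. j \<in> {1..n} \<Longrightarrow> 1 \<le> i \<Longrightarrow>
                    distributed M lborel (X j i) (\<lambda>x. ennreal (pros_density f s n \<alpha> j x))"
  shows
    "(\<forall>L\<ge>1. rv_mean M (pros_est n h X L) = (\<integral>x. f x * h x \<partial>lborel))
     \<and> (\<forall>L\<ge>1. \<forall>(M' :: 'b measure) (Y :: nat \<Rightarrow> 'b \<Rightarrow> real).
          prob_space M' \<and> prob_space.indep_vars M' (\<lambda>_. borel) Y {1..n * L} \<and>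
          (\<forall>k\<in>{1..n * L}. distributed M' lborel (Y k) (\<lambda>x. ennreal (f x)))
          \<longrightarrow> rv_var M (pros_est n h X L)
              \<le> rv_var M' (\<lambda>\<omega>. (\<Sum>k=1..n * L. h (Y k \<omega>)) / real (n * L)))
     \<and> (0 < (\<integral>x. f x * (h x - (\<integral>y. f y * h y \<partial>lborel))\<^sup>2 \<partial>lborel) \<longrightarrow>
          weak_conv_m
            (\<lambda>L. distr M borel (\<lambda>\<omega>. (pros_est n h X L \<omega> - (\<integral>x. f x * h x \<partial>lborel))
                                       / sqrt (rv_var M (pros_est n h X L))))
            std_normal_distribution)
     \<and> (AE \<omega> in M. (\<lambda>L. pros_est n h X L \<omega>) \<longlonglongrightarrow> (\<integral>x. f x * h x \<partial>lborel))"
proof -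
  interpret prob_space M by (rule M)
  interpret pros_setup f s n \<alpha>
    using f_meas f_nonneg f_int n_pos s_pos n_dvd alpha by unfold_locales auto
  have Xm: "X j i \<in> borel_measurable M" if "j \<in> {1..n}" "1 \<le> i" for j i
    using distributed_measurable[OF X_distr[OF that]] by simp
  have g1: "(\<integral>x. g j x \<partial>lborel) = 1" if j: "j \<in> {1..n}" for j
    using distributed_integral[OF X_distr[OF j, of 1], of "\<lambda>_. 1"] g_nonneg[OF j] by (simp add: prob_space)
  interpret pros_h f s n \<alpha> h
    using h_meas h_mom g1 by unfold_locales auto
  define Ind where "Ind = {1..n} \<times> {1::nat..}"
  define WW where "WW k \<omega> = h (X (fst k) (snd k) \<omega>)" for k \<omega>
  have WWm: "WW k \<in> borel_measurable M" if "k \<in> Ind" for k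
    using Xm[of "fst k" "snd k"] that unfolding WW_def Ind_def by (cases k) auto
  have EW: "(\<integral>\<omega>. WW k \<omega> \<partial>M) = muj (fst k)" if "k \<in> Ind" for k
    using distributed_integral[OF X_distr[of "fst k" "snd k"], of h] g_nonneg[of "fst k"] that
    unfolding WW_def Ind_def muj_def by (cases k) auto
  have EW2: "(\<integral>\<omega>. (WW k \<omega>)\<^sup>2 \<partial>M) = nuj (fst k)" if "k \<in> Ind" for k
    using distributed_integral[OF X_distr[of "fst k" "snd k"], of "\<lambda>x. (h x)\<^sup>2"] g_nonneg[of "fst k"] that
    unfolding WW_def Ind_def nuj_def by (cases k) auto
  have IW2: "integrable M (\<lambda>\<omega>. (WW k \<omega>)\<^sup>2)" if "k \<in> Ind" for k
    using distributed_integrable[OF X_distr[of "fst k" "snd k"], of "\<lambda>x. (h x)\<^sup>2"] g_nonneg[of "fst k"] that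
      gh2_int[of "fst k"]
    unfolding WW_def Ind_def by (cases k) auto
  have IW: "integrable M (WW k)" if "k \<in> Ind" for k
    by (rule square_integrable_imp_integrable[OF WWm[OF that] IW2[OF that]])
  have indW: "indep_vars (\<lambda>_. borel) WW Ind"
  proof -
    have "indep_vars (\<lambda>_. borel) (\<lambda>k x. h ((\<lambda>(j, i). X j i) k x)) Ind"
      unfolding Ind_def by (rule indep_vars_compose2[OF X_indep]) simp
    moreover have "(\<lambda>k x. h ((\<lambda>(j, i). X j i) k x)) = WW"
      by (auto simp: WW_def fun_eq_iff split: prod.splits)
    ultimately show ?thesis by simp
  qed
  have uncW: "(\<integral>\<omega>. WW a \<omega> * WW b \<omega> \<partial>M) = (\<integral>\<omega>. WW a \<omega> \<partial>M) * (\<integral>\<omega>. WW b \<omega> \<partial>M)"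
    if "a \<in> Ind" "b \<in> Ind" "a \<noteq> b" for a b
  proof -
    have i2: "indep_vars (\<lambda>_. borel) WW {a, b}"
      by (rule indep_vars_subset[OF indW]) (use that in auto)
    have "(\<integral>\<omega>. (\<Prod>k\<in>{a,b}. WW k \<omega>) \<partial>M) = (\<Prod>k\<in>{a,b}. \<integral>\<omega>. WW k \<omega> \<partial>M)"
      by (rule indep_vars_lebesgue_integral[OF _ i2]) (use that IW in auto)
    then show ?thesis using that by simp
  qed
  define IL where "IL L = {1..n} \<times> {1..L}" for L :: nat
  have ILsub: "IL L \<subseteq> Ind" for L by (auto simp: IL_def Ind_def)
  have ILfin: "finite (IL L)" for L by (simp add: IL_def)
  have pe_form: "pros_est n h X L = (\<lambda>\<omega>. (\<Sum>k\<in>IL L. WW k \<omega>) / real (n * L))" for L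
  proof
    fix \<omega>
    have "(\<Sum>i=1..L. \<Sum>j=1..n. h (X j i \<omega>)) = (\<Sum>j=1..n. \<Sum>i=1..L. h (X j i \<omega>))"
      by (rule sum.swap)
    also have "\<dots> = (\<Sum>(j,i)\<in>{1..n}\<times>{1..L}. h (X j i \<omega>))"
      by (rule sum.cartesian_product)
    also have "\<dots> = (\<Sum>k\<in>IL L. WW k \<omega>)"
      by (simp add: IL_def WW_def case_prod_beta)
    finally show "pros_est n h X L \<omega> = (\<Sum>k\<in>IL L. WW k \<omega>) / real (n * L)"
      by (simp add: pros_est_def)
  qed
  have sumIL: "(\<Sum>k\<in>IL L. \<phi> (fst k)) = real L * (\<Sum>j=1..n. \<phi> j)" for L and \<phi> :: "nat \<Rightarrow> real"
  proof -
    have "(\<Sum>k\<in>IL L. \<phi> (fst k)) = (\<Sum>j=1..n. \<Sum>i=1..L. \<phi> j)"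
      unfolding IL_def by (subst sum.cartesian_product) (simp add: case_prod_beta)
    also have "\<dots> = real L * (\<Sum>j=1..n. \<phi> j)" by (simp add: sum_distrib_left)
    finally show ?thesis .
  qed
  have uncIL: "\<And>a b. a \<in> IL L \<Longrightarrow> b \<in> IL L \<Longrightarrow> a \<noteq> b \<Longrightarrow>
      (\<integral>x. WW a x * WW b x \<partial>M) = (\<integral>x. WW a x \<partial>M) * (\<integral>x. WW b x \<partial>M)" for L
    using uncW ILsub by blast
  define VZ where "VZ = (\<Sum>j=1..n. nuj j - (muj j)\<^sup>2)"
  have pe_mean: "rv_mean M (pros_est n h X L) = mu" if L: "1 \<le> L" for L
  proof -
    have "rv_mean M (pros_est n h X L) = (\<Sum>k\<in>IL L. \<integral>x. WW k x \<partial>M) / real (n * L)"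
      unfolding pe_form
      by (rule avg_moments(1)[OF ILfin _ _ uncIL]) (auto intro!: WWm IW2 subsetD[OF ILsub])
    also have "(\<Sum>k\<in>IL L. \<integral>x. WW k x \<partial>M) = (\<Sum>k\<in>IL L. muj (fst k))"
      using ILsub EW by (intro sum.cong) auto
    also have "\<dots> = real L * (real n * mu)" by (simp only: sumIL sum_muj)
    finally show ?thesis using L n_pos by simp
  qed
  have pe_var: "rv_var M (pros_est n h X L) = real L * VZ / (real (n * L))\<^sup>2" for L
  proof -
    have "rv_var M (pros_est n h X L) = (\<Sum>k\<in>IL L. (\<integral>x. (WW k x)\<^sup>2 \<partial>M) - (\<integral>x. WW k x \<partial>M)\<^sup>2) / (real (n * L))\<^sup>2"
      unfolding pe_form
      by (rule avg_moments(2)[OF ILfin _ _ uncIL]) (auto intro!: WWm IW2 subsetD[OF ILsub])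
    also have "(\<Sum>k\<in>IL L. (\<integral>x. (WW k x)\<^sup>2 \<partial>M) - (\<integral>x. WW k x \<partial>M)\<^sup>2) = (\<Sum>k\<in>IL L. nuj (fst k) - (muj (fst k))\<^sup>2)"
    proof (rule sum.cong[OF refl])
      fix k assume "k \<in> IL L"
      then have k: "k \<in> Ind" using ILsub by blast
      show "(\<integral>x. (WW k x)\<^sup>2 \<partial>M) - (\<integral>x. WW k x \<partial>M)\<^sup>2 = nuj (fst k) - (muj (fst k))\<^sup>2"
        by (simp only: EW[OF k] EW2[OF k])
    qed
    also have "\<dots> = real L * VZ" unfolding VZ_def by (rule sumIL)
    finally show ?thesis .
  qed
  have part1: "\<forall>L\<ge>1. rv_mean M (pros_est n h X L) = (\<integral>x. f x * h x \<partial>lborel)"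
    using pe_mean by (simp add: mu_def)
  have part2: "\<forall>L\<ge>1. \<forall>(M' :: 'b measure) (Y :: nat \<Rightarrow> 'b \<Rightarrow> real).
          prob_space M' \<and> prob_space.indep_vars M' (\<lambda>_. borel) Y {1..n * L} \<and>
          (\<forall>k\<in>{1..n * L}. distributed M' lborel (Y k) (\<lambda>x. ennreal (f x)))
          \<longrightarrow> rv_var M (pros_est n h X L)
              \<le> rv_var M' (\<lambda>\<omega>. (\<Sum>k=1..n * L. h (Y k \<omega>)) / real (n * L))"
  proof (intro allI impI)
    fix L :: nat and M' :: "'b measure" and Y :: "nat \<Rightarrow> 'b \<Rightarrow> real"
    assume L: "1 \<le> L" and H: "prob_space M' \<and> prob_space.indep_vars M' (\<lambda>_. borel) Y {1..n * L} \<and>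
          (\<forall>k\<in>{1..n * L}. distributed M' lborel (Y k) (\<lambda>x. ennreal (f x)))"
    interpret M': prob_space M' using H by simp
    have indY: "M'.indep_vars (\<lambda>_. borel) Y {1..n * L}" using H by simp
    have Yd: "distributed M' lborel (Y k) (\<lambda>x. ennreal (f x))" if "k \<in> {1..n * L}" for k
      using H that by simp
    define U where "U k \<omega> = h (Y k \<omega>)" for k \<omega>
    have Um: "U k \<in> borel_measurable M'" if "k \<in> {1..n * L}" for k
      using distributed_measurable[OF Yd[OF that]] unfolding U_def by simp
    have EU: "(\<integral>\<omega>. U k \<omega> \<partial>M') = mu" if "k \<in> {1..n * L}" for k
      using distributed_integral[OF Yd[OF that], of h] f_nonneg unfolding U_def mu_def by simp
    have EU2: "(\<integral>\<omega>. (U k \<omega>)\<^sup>2 \<partial>M') = nu" if "k \<in> {1..n * L}" for k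
      using distributed_integral[OF Yd[OF that], of "\<lambda>x. (h x)\<^sup>2"] f_nonneg unfolding U_def nu_def by simp
    have IU2: "integrable M' (\<lambda>\<omega>. (U k \<omega>)\<^sup>2)" if "k \<in> {1..n * L}" for k
      using distributed_integrable[OF Yd[OF that], of "\<lambda>x. (h x)\<^sup>2"] f_nonneg h_mom unfolding U_def by simp
    have IU: "integrable M' (U k)" if "k \<in> {1..n * L}" for k
      by (rule M'.square_integrable_imp_integrable[OF Um[OF that] IU2[OF that]])
    have indU: "M'.indep_vars (\<lambda>_. borel) U {1..n * L}"
      unfolding U_def by (rule M'.indep_vars_compose2[OF indY]) simp
    have uncU: "(\<integral>\<omega>. U a \<omega> * U b \<omega> \<partial>M') = (\<integral>\<omega>. U a \<omega> \<partial>M') * (\<integral>\<omega>. U b \<omega> \<partial>M')"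
      if "a \<in> {1..n * L}" "b \<in> {1..n * L}" "a \<noteq> b" for a b
    proof -
      have i2: "M'.indep_vars (\<lambda>_. borel) U {a, b}"
        by (rule M'.indep_vars_subset[OF indU]) (use that in auto)
      have "(\<integral>\<omega>. (\<Prod>k\<in>{a,b}. U k \<omega>) \<partial>M') = (\<Prod>k\<in>{a,b}. \<integral>\<omega>. U k \<omega> \<partial>M')"
        by (rule M'.indep_vars_lebesgue_integral[OF _ i2]) (use that IU in auto)
      then show ?thesis using that by simp
    qed
    have "rv_var M' (\<lambda>\<omega>. (\<Sum>k\<in>{1..n * L}. U k \<omega>) / real (n * L))
       = (\<Sum>k\<in>{1..n * L}. (\<integral>x. (U k x)\<^sup>2 \<partial>M') - (\<integral>x. U k x \<partial>M')\<^sup>2) / (real (n * L))\<^sup>2"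
      by (rule M'.avg_moments(2)) (auto intro!: Um IU2 uncU)
    also have "(\<Sum>k\<in>{1..n * L}. (\<integral>x. (U k x)\<^sup>2 \<partial>M') - (\<integral>x. U k x \<partial>M')\<^sup>2)
        = (\<Sum>k\<in>{1..n * L}. nu - mu\<^sup>2)"
    proof (rule sum.cong[OF refl])
      fix k assume k: "k \<in> {1..n * L}"
      show "(\<integral>x. (U k x)\<^sup>2 \<partial>M') - (\<integral>x. U k x \<partial>M')\<^sup>2 = nu - mu\<^sup>2"
        by (simp only: EU[OF k] EU2[OF k])
    qed
    also have "\<dots> = real (n * L) * (nu - mu\<^sup>2)" by simp
    finally have vs: "rv_var M' (\<lambda>\<omega>. (\<Sum>k=1..n * L. h (Y k \<omega>)) / real (n * L))
         = real (n * L) * (nu - mu\<^sup>2) / (real (n * L))\<^sup>2" by (simp add: U_def)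
    have "real L * VZ \<le> real L * (real n * (nu - mu\<^sup>2))"
      using var_ineq unfolding VZ_def by (intro mult_left_mono) auto
    then have "real L * VZ \<le> real (n * L) * (nu - mu\<^sup>2)" by (simp add: algebra_simps)
    then show "rv_var M (pros_est n h X L) \<le> rv_var M' (\<lambda>\<omega>. (\<Sum>k=1..n * L. h (Y k \<omega>)) / real (n * L))"
      unfolding vs pe_var by (intro divide_right_mono) auto
  qed
  define Zp where "Zp i \<omega> = (\<Sum>j=1..n. h (X j (Suc i) \<omega>))" for i \<omega>
  define G0 where "G0 w = (\<Sum>j=1..n. h (w j))" for w :: "nat \<Rightarrow> real"
  define D0 where "D0 = distr (PiM {1..n} (\<lambda>j. density lborel (\<lambda>x. ennreal (g j x)))) borel G0"
  have G0m: "G0 \<in> borel_measurable (PiM {1..n} (\<lambda>_. borel))"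
    unfolding G0_def
  proof (rule borel_measurable_sum)
    fix j :: nat assume j: "j \<in> {1..n}"
    have "(\<lambda>w::nat\<Rightarrow>real. w j) \<in> measurable (PiM {1..n} (\<lambda>_. borel)) borel"
      using measurable_component_singleton[OF j, of "\<lambda>_. borel"] by simp
    from measurable_compose[OF this h_meas]
    show "(\<lambda>w. h (w j)) \<in> borel_measurable (PiM {1..n} (\<lambda>_. borel))" .
  qed
  have distX: "distr M borel ((\<lambda>(j, i). X j i) (j, i)) = density lborel (\<lambda>x. ennreal (g j x))"
    if "j \<in> {1..n}" "1 \<le> i" for j i
  proof -
    have "distr M borel (X j i) = distr M lborel (X j i)" by (rule distr_cong) auto
    also have "\<dots> = density lborel (\<lambda>x. ennreal (g j x))"
      by (rule distributed_distr_eq_density[OF X_distr[OF that]])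
    finally show ?thesis by simp
  qed
  have Zp_eq: "(\<lambda>i \<omega>. G0 (\<lambda>j\<in>{1..n}. (\<lambda>(j, i). X j i) (j, Suc i) \<omega>)) = Zp"
    by (auto simp: Zp_def G0_def fun_eq_iff intro!: sum.cong)
  have indZ: "indep_vars (\<lambda>_. borel) Zp UNIV"
    using block_iid(1)[OF X_indep distX n_pos G0m] unfolding Zp_eq .
  have distZ: "distr M borel (Zp i) = D0" for i
  proof -
    have Zpi: "Zp i = (\<lambda>\<omega>. G0 (\<lambda>j\<in>{1..n}. (\<lambda>(j, i). X j i) (j, Suc i) \<omega>))"
      using fun_cong[OF Zp_eq, of i] by simp
    show ?thesis unfolding Zpi D0_def by (rule block_iid(2)[OF X_indep distX n_pos G0m])
  qed
  have Zp_WW: "Zp i \<omega> = (\<Sum>j\<in>{1..n}. WW (j, Suc i) \<omega>)" for i \<omega>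
    by (simp add: Zp_def WW_def)
  have jInd: "(j, Suc i) \<in> Ind" if "j \<in> {1..n}" for j i using that by (simp add: Ind_def)
  have Zpm: "Zp i \<in> borel_measurable M" for i
    unfolding Zp_WW[abs_def] by (rule borel_measurable_sum) (rule WWm[OF jInd])
  have IZ2: "integrable M (\<lambda>\<omega>. (Zp i \<omega>)\<^sup>2)" for i
    unfolding Zp_WW by (rule sum_sq_int) (auto intro!: WWm IW2 jInd)
  have IZ: "integrable M (Zp i)" for i
    by (rule square_integrable_imp_integrable[OF Zpm IZ2])
  have EZ: "(\<integral>\<omega>. Zp i \<omega> \<partial>M) = real n * mu" for i
  proof -
    have "(\<integral>\<omega>. Zp i \<omega> \<partial>M) = (\<Sum>j\<in>{1..n}. \<integral>\<omega>. WW (j, Suc i) \<omega> \<partial>M)"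
      unfolding Zp_WW by (rule Bochner_Integration.integral_sum) (auto intro!: IW jInd)
    also have "\<dots> = (\<Sum>j\<in>{1..n}. muj j)"
      by (rule sum.cong[OF refl]) (simp add: EW[OF jInd])
    also have "\<dots> = real n * mu" by (rule sum_muj)
    finally show ?thesis .
  qed
  have VZeq: "(\<integral>\<omega>. (Zp i \<omega> - real n * mu)\<^sup>2 \<partial>M) = VZ" for i
  proof -
    have "(\<integral>\<omega>. ((\<Sum>j\<in>{1..n}. WW (j, Suc i) \<omega>) - (\<Sum>j\<in>{1..n}. \<integral>y. WW (j, Suc i) y \<partial>M))\<^sup>2 \<partial>M)
      = (\<Sum>j\<in>{1..n}. (\<integral>\<omega>. (WW (j, Suc i) \<omega>)\<^sup>2 \<partial>M) - (\<integral>\<omega>. WW (j, Suc i) \<omega> \<partial>M)\<^sup>2)"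
      by (rule var_sum[where V="\<lambda>j. WW (j, Suc i)"]) (auto intro!: WWm IW2 jInd uncW)
    also have "\<dots> = VZ" unfolding VZ_def
      by (rule sum.cong[OF refl]) (simp add: EW[OF jInd] EW2[OF jInd])
    also have "(\<Sum>j\<in>{1..n}. \<integral>y. WW (j, Suc i) y \<partial>M) = real n * mu"
      using EZ[of i] unfolding Zp_WW
      by (subst (asm) Bochner_Integration.integral_sum) (auto intro!: IW jInd)
    finally show ?thesis unfolding Zp_WW by simp
  qed
  have EZZ: "(\<integral>\<omega>. Zp a \<omega> * Zp b \<omega> \<partial>M) = (real n * mu) * (real n * mu)" if "a \<noteq> b" for a b
  proof -
    have i2: "indep_vars (\<lambda>_. borel) Zp {a, b}"
      by (rule indep_vars_subset[OF indZ]) auto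
    have "(\<integral>\<omega>. (\<Prod>k\<in>{a,b}. Zp k \<omega>) \<partial>M) = (\<Prod>k\<in>{a,b}. \<integral>\<omega>. Zp k \<omega> \<partial>M)"
      by (rule indep_vars_lebesgue_integral[OF _ i2]) (auto intro: IZ)
    then show ?thesis using that by (simp add: EZ)
  qed
  define c where "c = real n * mu"
  define V' where "V' i \<omega> = Zp i \<omega> - c" for i \<omega>
  have V'm: "V' i \<in> borel_measurable M" for i unfolding V'_def using Zpm[of i] by simp
  have V'eq: "(\<lambda>\<omega>. (V' i \<omega>)\<^sup>2) = (\<lambda>\<omega>. (Zp i \<omega>)\<^sup>2 - 2 * c * Zp i \<omega> + c\<^sup>2)" for i
    by (auto simp: V'_def power2_eq_square algebra_simps)
  have IV'2: "integrable M (\<lambda>\<omega>. (V' i \<omega>)\<^sup>2)" for i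
    unfolding V'eq using IZ2[of i] IZ[of i] by auto
  have EV': "(\<integral>\<omega>. V' i \<omega> \<partial>M) = 0" for i
    unfolding V'_def using IZ[of i] EZ[of i] by (simp add: prob_space c_def)
  have uncV': "(\<integral>\<omega>. V' a \<omega> * V' b \<omega> \<partial>M) = 0" if "a \<noteq> b" for a b
  proof -
    have e: "(\<lambda>\<omega>. V' a \<omega> * V' b \<omega>) = (\<lambda>\<omega>. Zp a \<omega> * Zp b \<omega> - c * Zp a \<omega> - c * Zp b \<omega> + c * c)"
      by (auto simp: V'_def algebra_simps)
    have ip: "integrable M (\<lambda>\<omega>. Zp a \<omega> * Zp b \<omega>)"
      by (rule sq_int_mult[OF Zpm Zpm IZ2 IZ2])
    show ?thesis unfolding e using ip IZ[of a] IZ[of b] EZZ[OF that] EZ[of a] EZ[of b]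
      by (simp add: prob_space c_def)
  qed
  have bV': "(\<integral>\<omega>. (V' i \<omega>)\<^sup>2 \<partial>M) \<le> VZ" for i
    using VZeq[of i] by (simp add: V'_def c_def)
  have slln: "AE \<omega> in M. (\<lambda>N. (\<Sum>k<N. V' k \<omega>) / real N) \<longlonglongrightarrow> 0"
    by (rule slln_uncorr[OF V'm IV'2 EV' uncV' bV'])
  have pe_Z: "pros_est n h X L \<omega> = (\<Sum>k<L. Zp k \<omega>) / real (n * L)" for L \<omega>
    unfolding pros_est_def Zp_def by (simp add: sum.atLeast1_atMost_eq)
  have pe_V: "pros_est n h X L \<omega> = ((\<Sum>k<L. V' k \<omega>) / real L) / real n + mu" if L: "1 \<le> L" for L \<omega>
  proof -
    have "(\<Sum>k<L. V' k \<omega>) = (\<Sum>k<L. Zp k \<omega>) - real L * c"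
      by (simp add: V'_def sum_subtractf)
    then show ?thesis unfolding pe_Z using L n_pos by (simp add: c_def field_simps)
  qed
  have part4: "AE \<omega> in M. (\<lambda>L. pros_est n h X L \<omega>) \<longlonglongrightarrow> (\<integral>x. f x * h x \<partial>lborel)"
    using slln
  proof (rule AE_mp, intro AE_I2 impI)
    fix \<omega> assume T: "(\<lambda>N. (\<Sum>k<N. V' k \<omega>) / real N) \<longlonglongrightarrow> 0"
    have "(\<lambda>L. ((\<Sum>k<L. V' k \<omega>) / real L) / real n + mu) \<longlonglongrightarrow> 0 / real n + mu"
      using n_pos by (intro tendsto_intros T) auto
    then have T2: "(\<lambda>L. ((\<Sum>k<L. V' k \<omega>) / real L) / real n + mu) \<longlonglongrightarrow> mu" by simp
    have ev: "eventually (\<lambda>L. ((\<Sum>k<L. V' k \<omega>) / real L) / real n + mu = pros_est n h X L \<omega>) sequentially"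
      using pe_V by (auto simp: eventually_sequentially intro!: exI[of _ 1])
    show "(\<lambda>L. pros_est n h X L \<omega>) \<longlonglongrightarrow> (\<integral>x. f x * h x \<partial>lborel)"
      using tendsto_cong[OF ev] T2 by (simp add: mu_def)
  qed
  have part3: "0 < (\<integral>x. f x * (h x - (\<integral>y. f y * h y \<partial>lborel))\<^sup>2 \<partial>lborel) \<longrightarrow>
          weak_conv_m
            (\<lambda>L. distr M borel (\<lambda>\<omega>. (pros_est n h X L \<omega> - (\<integral>x. f x * h x \<partial>lborel))
                                       / sqrt (rv_var M (pros_est n h X L))))
            std_normal_distribution"
    unfolding mu_def[symmetric]
  proof
    assume pos: "0 < (\<integral>x. f x * (h x - mu)\<^sup>2 \<partial>lborel)"
    have VZpos: "0 < VZ" unfolding VZ_def by (rule var_pos[OF pos])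
    have clt: "weak_conv_m (\<lambda>L. distr M borel (\<lambda>x. (\<Sum>i<L. Zp i x - c) / sqrt (real L * (sqrt VZ)\<^sup>2))) std_normal_distribution"
      by (rule central_limit_theorem[where m=c and \<sigma>="sqrt VZ" and \<mu>=D0, OF indZ])
         (use EZ VZpos IZ2 VZeq distZ in \<open>auto simp: c_def\<close>)
    have fe: "(\<lambda>L. distr M borel (\<lambda>\<omega>. (pros_est n h X L \<omega> - mu) / sqrt (rv_var M (pros_est n h X L))))
       = (\<lambda>L. distr M borel (\<lambda>x. (\<Sum>i<L. Zp i x - c) / sqrt (real L * (sqrt VZ)\<^sup>2)))"
    proof (rule ext)
      fix L :: nat
      show "distr M borel (\<lambda>\<omega>. (pros_est n h X L \<omega> - mu) / sqrt (rv_var M (pros_est n h X L)))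
         = distr M borel (\<lambda>x. (\<Sum>i<L. Zp i x - c) / sqrt (real L * (sqrt VZ)\<^sup>2))"
      proof (rule distr_cong[OF refl refl])
        fix \<omega>
        show "(pros_est n h X L \<omega> - mu) / sqrt (rv_var M (pros_est n h X L))
           = (\<Sum>i<L. Zp i \<omega> - c) / sqrt (real L * (sqrt VZ)\<^sup>2)"
        proof (cases "L = 0")
          case True
          then show ?thesis using pe_var[of 0] by simp
        next
          case False
          have nL: "real (n * L) > 0" using False n_pos by simp
          have sq: "sqrt (rv_var M (pros_est n h X L)) = sqrt (real L * VZ) / real (n * L)"
            unfolding pe_var using nL by (simp add: real_sqrt_divide)
          have sv: "sqrt (real L * (sqrt VZ)\<^sup>2) = sqrt (real L * VZ)" using VZpos by simp
          have num: "pros_est n h X L \<omega> - mu = (\<Sum>i<L. Zp i \<omega> - c) / real (n * L)"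
          proof -
            have "(\<Sum>i<L. Zp i \<omega> - c) = (\<Sum>i<L. Zp i \<omega>) - real L * c" by (simp add: sum_subtractf)
            then have e: "(\<Sum>i<L. Zp i \<omega>) = (\<Sum>i<L. Zp i \<omega> - c) + real (n * L) * mu"
              by (simp add: c_def algebra_simps)
            have gen: "A = B + N * mu \<Longrightarrow> N > 0 \<Longrightarrow> A / N - mu = B / N" for A B N :: real
              by (simp add: field_simps)
            show ?thesis unfolding pe_Z by (rule gen[OF e nL])
          qed
          show ?thesis unfolding sq sv num using nL n_pos False by (simp add: field_simps)
        qed
      qed
    qed
    show "weak_conv_m (\<lambda>L. distr M borel (\<lambda>\<omega>. (pros_est n h X L \<omega> - mu) / sqrt (rv_var M (pros_est n h X L))))
        std_normal_distribution"
      unfolding fe by (rule clt)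
  qed
  show ?thesis using part1 part2 part3 part4 by blast
qed

end
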